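(* Let $\Gamma$ be a connected simple graph of connectivity $1$, and let $\Lambda_0$ be an arbitrary lobe of $\Gamma$. Let $\{P_i : i\in\mathbb{I}\}$ be the set of orbits of $\mathrm{Aut}(\Gamma)$ acting on $V\Gamma$. Let $S\le \mathrm{Aut}(\Gamma)$ be the setwise stabilizer of $\Lambda_0$, and let $\{Q_j : j\in\mathbb{J}\}$ be the set of orbits of $S$ on $V\Gamma$ that are contained in $V\Lambda_0$. For each $j\in\mathbb{J}$ let $P_{i_j}$ denote the orbit of $\mathrm{Aut}(\Gamma)$ containing $Q_j$. Then $\Gamma$ is lobe-transitive (i.e. $\mathrm{Aut}(\Gamma)$ acts transitively on the set $\mathscr{L}(\Gamma)$ of lobes) if and only if the following hold: (1) there is a family of graph isomorphisms $\sigma_\Lambda:\Lambda_0\to\Lambda$, one for each lobe $\Lambda\in\mathscr{L}(\Gamma)$, such that (2) for each $j\in\mathbb{J}$, the function $\tau_j:V\Gamma\to\mathbb{N}\cup\{0,\aleph_0\}$ defined by $$\tau_j(v)=\bigl|\{\Lambda\in\mathscr{L}(\Gamma): v\in\sigma_\Lambda(Q_j)\}\bigr|$$ satisfies (a) $\tau_j$ is constant on $P_i$ for every $i\in\mathbb{I}$, and (b) for all $v\in V\Gamma$, $\tau_j(v)>0$ if and only if $v\in P_{i_j}$ (i.e. $v$ lies in the $\mathrm{Aut}(\Gamma)$-orbit that contains the sets $\sigma_\Lambda(Q_j)$).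
   Context: All graphs are simple, connected, and finite or countably infinite (so vertex valences are finite or countably infinite). For edges $e_1,e_2$ of $\Gamma$ write $e_1\cong e_2$ if $e_1=e_2$ or $e_1,e_2$ lie on a common cycle; this is an equivalence relation on $E\Gamma$. A lobe of $\Gamma$ is the subgraph induced by an equivalence class (equivalently, a cut-edge with its two end-vertices, or a maximal biconnected subgraph). $\mathscr{L}(\Gamma)$ is the set of lobes. A vertex is a cut vertex if it lies in at least two lobes; a connected graph other than $K_2$ has connectivity $1$ iff it has a cut vertex. $\mathbb{N}$ denotes the positive integers. *)

theory Defs
  imports Main "HOL-Library.Extended_Nat" "HOL-Library.Countable_Set"
begin

definition simple_graph :: "'a set \<Rightarrow> ('a \<Rightarrow> 'a \<Rightarrow> bool) \<Rightarrow> bool" where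
  "simple_graph V E \<longleftrightarrow> countable V \<and> V \<noteq> {} \<and>
     (\<forall>u v. E u v \<longrightarrow> u \<in> V \<and> v \<in> V \<and> u \<noteq> v \<and> E v u)"

definition connected_graph :: "'a set \<Rightarrow> ('a \<Rightarrow> 'a \<Rightarrow> bool) \<Rightarrow> bool" where
  "connected_graph V E \<longleftrightarrow> (\<forall>u\<in>V. \<forall>v\<in>V. E\<^sup>*\<^sup>* u v)"

definition edges :: "'a set \<Rightarrow> ('a \<Rightarrow> 'a \<Rightarrow> bool) \<Rightarrow> 'a set set" where
  "edges V E = {{u, v} | u v. u \<in> V \<and> v \<in> V \<and> E u v}"

definition is_cycle :: "'a set \<Rightarrow> ('a \<Rightarrow> 'a \<Rightarrow> bool) \<Rightarrow> 'a list \<Rightarrow> bool" where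
  "is_cycle V E cs \<longleftrightarrow> length cs \<ge> 3 \<and> distinct cs \<and> set cs \<subseteq> V \<and>
     (\<forall>i < length cs. E (cs ! i) (cs ! ((i + 1) mod length cs)))"

definition cycle_edges :: "'a list \<Rightarrow> 'a set set" where
  "cycle_edges cs = {{cs ! i, cs ! ((i + 1) mod length cs)} | i. i < length cs}"

definition edge_rel :: "'a set \<Rightarrow> ('a \<Rightarrow> 'a \<Rightarrow> bool) \<Rightarrow> 'a set \<Rightarrow> 'a set \<Rightarrow> bool" where
  "edge_rel V E e1 e2 \<longleftrightarrow> e1 = e2 \<or>
     (\<exists>cs. is_cycle V E cs \<and> e1 \<in> cycle_edges cs \<and> e2 \<in> cycle_edges cs)"

text \<open>Lobes, represented by their edge sets (equivalence classes of \<cong>);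
  the vertex set of a lobe L is \<Union>L.\<close>
definition lobes :: "'a set \<Rightarrow> ('a \<Rightarrow> 'a \<Rightarrow> bool) \<Rightarrow> 'a set set set" where
  "lobes V E = {{e' \<in> edges V E. edge_rel V E e e'} | e. e \<in> edges V E}"

definition cut_vertex :: "'a set \<Rightarrow> ('a \<Rightarrow> 'a \<Rightarrow> bool) \<Rightarrow> 'a \<Rightarrow> bool" where
  "cut_vertex V E v \<longleftrightarrow> v \<in> V \<and> (\<exists>L1 \<in> lobes V E. \<exists>L2 \<in> lobes V E. L1 \<noteq> L2 \<and> v \<in> \<Union>L1 \<and> v \<in> \<Union>L2)"

definition connectivity_one :: "'a set \<Rightarrow> ('a \<Rightarrow> 'a \<Rightarrow> bool) \<Rightarrow> bool" where
  "connectivity_one V E \<longleftrightarrow> connected_graph V E \<and> (\<exists>v. cut_vertex V E v)"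

definition automorphisms :: "'a set \<Rightarrow> ('a \<Rightarrow> 'a \<Rightarrow> bool) \<Rightarrow> ('a \<Rightarrow> 'a) set" where
  "automorphisms V E = {f. bij_betw f V V \<and> (\<forall>u\<in>V. \<forall>v\<in>V. E u v \<longleftrightarrow> E (f u) (f v))}"

definition edge_image :: "('a \<Rightarrow> 'a) \<Rightarrow> 'a set set \<Rightarrow> 'a set set" where
  "edge_image f L = (\<lambda>e. f ` e) ` L"

definition lobe_transitive :: "'a set \<Rightarrow> ('a \<Rightarrow> 'a \<Rightarrow> bool) \<Rightarrow> bool" where
  "lobe_transitive V E \<longleftrightarrow>
     (\<forall>L1 \<in> lobes V E. \<forall>L2 \<in> lobes V E. \<exists>f \<in> automorphisms V E. edge_image f L1 = L2)"

definition orbit_of :: "('a \<Rightarrow> 'a) set \<Rightarrow> 'a \<Rightarrow> 'a set" where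
  "orbit_of G v = {f v | f. f \<in> G}"

definition lobe_stabilizer :: "'a set \<Rightarrow> ('a \<Rightarrow> 'a \<Rightarrow> bool) \<Rightarrow> 'a set set \<Rightarrow> ('a \<Rightarrow> 'a) set" where
  "lobe_stabilizer V E L0 = {f \<in> automorphisms V E. edge_image f L0 = L0}"

definition lobe_iso :: "'a set set \<Rightarrow> 'a set set \<Rightarrow> ('a \<Rightarrow> 'a) \<Rightarrow> bool" where
  "lobe_iso L0 L g \<longleftrightarrow> bij_betw g (\<Union>L0) (\<Union>L) \<and>
     (\<forall>x\<in>\<Union>L0. \<forall>y\<in>\<Union>L0. {x, y} \<in> L0 \<longleftrightarrow> {g x, g y} \<in> L)"

text \<open>Cardinality in \<nat> \<union> {0, aleph_0} (sets involved are countable).\<close>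
definition ecount :: "'b set \<Rightarrow> enat" where
  "ecount A = (if finite A then enat (card A) else \<infinity>)"

end

theory Submission
  imports Defs
begin

fun wlk :: "('a \<Rightarrow> 'a \<Rightarrow> bool) \<Rightarrow> 'a list \<Rightarrow> bool" where
  "wlk R [] = False"
| "wlk R [x] = True"
| "wlk R (x # y # zs) = (R x y \<and> wlk R (y # zs))"

fun ped :: "'a list \<Rightarrow> 'a set set" where
  "ped (x # y # zs) = insert {x, y} (ped (y # zs))"
| "ped _ = {}"

lemma wlk_append: "wlk R (xs @ y # ys) \<longleftrightarrow> wlk R (xs @ [y]) \<and> wlk R (y # ys)"
  by (induction xs rule: induct_list012) auto

lemma ped_append: "ped (xs @ y # ys) = ped (xs @ [y]) \<union> ped (y # ys)"
  by (induction xs rule: induct_list012) auto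

lemma wlk_concat: "wlk R xs \<Longrightarrow> wlk R ys \<Longrightarrow> R (last xs) (hd ys) \<Longrightarrow> wlk R (xs @ ys)"
proof (induction xs rule: induct_list012)
  case (3 x y zs) then show ?case by auto
next
  case (2 x) then show ?case by (cases ys) auto
qed auto

lemma ped_concat: "xs \<noteq> [] \<Longrightarrow> ys \<noteq> [] \<Longrightarrow> ped (xs @ ys) = ped xs \<union> ped ys \<union> {{last xs, hd ys}}"
proof (induction xs rule: induct_list012)
  case (2 x) then show ?case by (cases ys) auto
next
  case (3 x y zs) then show ?case by auto
qed auto

lemma wlk_prefix: "wlk R (xs @ ys) \<Longrightarrow> xs \<noteq> [] \<Longrightarrow> wlk R xs"
  by (induction xs rule: induct_list012) auto

lemma wlk_suffix: "wlk R (xs @ ys) \<Longrightarrow> ys \<noteq> [] \<Longrightarrow> wlk R ys"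
  by (induction xs rule: induct_list012) (auto simp: neq_Nil_conv)

lemma ped_prefix: "ped xs \<subseteq> ped (xs @ ys)"
  by (induction xs rule: induct_list012) (auto simp: neq_Nil_conv)

lemma ped_Cons_sub: "ped ys \<subseteq> ped (x # ys)"
  by (cases ys) auto

lemma ped_suffix: "ped ys \<subseteq> ped (xs @ ys)"
  by (induction xs) (auto dest: ped_Cons_sub[THEN subsetD])

lemma wlk_rev: "(\<And>u v. R u v \<Longrightarrow> R v u) \<Longrightarrow> wlk R xs \<Longrightarrow> wlk R (rev xs)"
proof (induction xs rule: induct_list012)
  case (3 x y zs)
  then have "wlk R (rev (y # zs))" by auto
  then show ?case using 3 wlk_concat[of R "rev (y#zs)" "[x]"] by auto
qed auto

lemma ped_rev: "ped (rev xs) = ped xs"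
proof (induction xs rule: induct_list012)
  case (3 x y zs)
  have "ped (rev (x # y # zs)) = ped (rev (y # zs) @ [x])" by simp
  also have "\<dots> = ped (rev (y#zs)) \<union> ped [x] \<union> {{last (rev (y#zs)), x}}"
    using ped_concat[of "rev (y#zs)" "[x]"] by simp
  finally show ?case using 3 by auto
qed auto

lemma wlk_mono: "wlk R xs \<Longrightarrow> (\<And>u v. R u v \<Longrightarrow> {u, v} \<in> ped xs \<Longrightarrow> R' u v) \<Longrightarrow> wlk R' xs"
proof (induction xs rule: induct_list012)
  case (3 x y zs)
  have "R x y" "wlk R (y # zs)" using 3(3) by auto
  have "R' x y" using 3(4)[OF \<open>R x y\<close>] by simp
  moreover have "wlk R' (y # zs)"
  proof (rule 3(2)[OF \<open>wlk R (y # zs)\<close>])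
    fix u v assume "R u v" "{u, v} \<in> ped (y # zs)"
    then show "R' u v" using 3(4) by simp
  qed
  ultimately show ?case by simp
qed auto

lemma wlk_ped: "wlk R xs \<Longrightarrow> e \<in> ped xs \<Longrightarrow> \<exists>u v. e = {u, v} \<and> R u v \<and> u \<in> set xs \<and> v \<in> set xs"
proof (induction xs rule: induct_list012)
  case (3 x y zs)
  then have "R x y" "wlk R (y # zs)" by auto
  from 3(4) have "e = {x, y} \<or> e \<in> ped (y # zs)" by simp
  then show ?case
  proof
    assume "e = {x, y}" then show ?thesis using \<open>R x y\<close> by auto
  next
    assume "e \<in> ped (y # zs)"
    then obtain u v where "e = {u, v}" "R u v" "u \<in> set (y # zs)" "v \<in> set (y # zs)"
      using 3(2) \<open>wlk R (y # zs)\<close> by blast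
    then show ?thesis by auto
  qed
qed auto

lemma wlk_rtranclp: "wlk R xs \<Longrightarrow> R\<^sup>*\<^sup>* (hd xs) (last xs)"
proof (induction xs rule: induct_list012)
  case (3 x y zs)
  then have "R x y" "R\<^sup>*\<^sup>* y (last (y # zs))" by auto
  then show ?case by (simp add: converse_rtranclp_into_rtranclp)
qed auto

lemma wlk_rtranclp_all: "wlk R xs \<Longrightarrow> z \<in> set xs \<Longrightarrow> R\<^sup>*\<^sup>* (hd xs) z"
proof -
  assume "wlk R xs" "z \<in> set xs"
  then obtain as bs where "xs = as @ z # bs" by (meson split_list)
  then have "wlk R (as @ [z])" using \<open>wlk R xs\<close> wlk_append by metis
  then show ?thesis using wlk_rtranclp[of R "as @ [z]"] \<open>xs = as @ z # bs\<close>
    by (cases as) auto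
qed

lemma rtranclp_wlk: "R\<^sup>*\<^sup>* x y \<Longrightarrow> \<exists>xs. wlk R xs \<and> hd xs = x \<and> last xs = y"
proof (induction rule: rtranclp_induct)
  case base then show ?case by (intro exI[of _ "[x]"]) auto
next
  case (step y z)
  then obtain xs where "wlk R xs" "hd xs = x" "last xs = y" by auto
  then show ?case using wlk_concat[of R xs "[z]"] step
    by (intro exI[of _ "xs @ [z]"]) (cases xs; auto)
qed

lemma wlk_shortcut:
  "wlk R xs \<Longrightarrow> \<exists>ys. wlk R ys \<and> distinct ys \<and> hd ys = hd xs \<and> last ys = last xs \<and>
     set ys \<subseteq> set xs \<and> ped ys \<subseteq> ped xs"
proof (induction "length xs" arbitrary: xs rule: less_induct)
  case less
  show ?case
  proof (cases "distinct xs")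
    case True then show ?thesis using less by blast
  next
    case False
    then obtain as y bs cs where xs: "xs = as @ [y] @ bs @ [y] @ cs"
      using not_distinct_decomp by blast
    let ?ys = "as @ y # cs"
    have w1: "wlk R (as @ [y])" using less(2) xs wlk_append[of R as y "bs @ [y] @ cs"] by auto
    have "wlk R ((as @ y # bs) @ y # cs)" using less(2) xs by simp
    then have w2: "wlk R (y # cs)" using wlk_append by metis
    have wy: "wlk R ?ys" using w1 w2 wlk_append by metis
    have "length ?ys < length xs" using xs by simp
    then obtain zs where zs: "wlk R zs" "distinct zs" "hd zs = hd ?ys" "last zs = last ?ys"
      "set zs \<subseteq> set ?ys" "ped zs \<subseteq> ped ?ys" using less(1) wy by blast
    have "hd ?ys = hd xs" using xs by (cases as) auto
    moreover have "last ?ys = last xs" using xs by (cases cs) auto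
    moreover have "set ?ys \<subseteq> set xs" using xs by auto
    moreover have "ped ?ys \<subseteq> ped xs"
    proof -
      have "ped ?ys = ped (as @ [y]) \<union> ped (y # cs)" by (rule ped_append)
      moreover have "ped xs = ped (as @ [y]) \<union> ped (y # bs @ y # cs)"
        using xs ped_append[of as y "bs @ y # cs"] by simp
      moreover have "ped (y # cs) \<subseteq> ped (y # bs @ y # cs)"
        using ped_suffix[of "y # cs" "y # bs"] by simp
      ultimately show ?thesis by auto
    qed
    ultimately show ?thesis using zs by (intro exI[of _ zs]) auto
  qed
qed

lemma wlk_nth: "wlk R xs \<longleftrightarrow> xs \<noteq> [] \<and> (\<forall>i. Suc i < length xs \<longrightarrow> R (xs ! i) (xs ! Suc i))"
proof (induction xs rule: induct_list012)
  case (3 x y zs)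
  show ?case
  proof
    assume "wlk R (x # y # zs)"
    then show "x # y # zs \<noteq> [] \<and> (\<forall>i. Suc i < length (x # y # zs) \<longrightarrow> R ((x # y # zs) ! i) ((x # y # zs) ! Suc i))"
      using 3 by (auto simp: less_Suc_eq_0_disj)
  next
    assume h: "x # y # zs \<noteq> [] \<and> (\<forall>i. Suc i < length (x # y # zs) \<longrightarrow> R ((x # y # zs) ! i) ((x # y # zs) ! Suc i))"
    then have "R x y" by (metis Suc_less_eq length_Cons nth_Cons_0 nth_Cons_Suc zero_less_Suc)
    moreover have "\<forall>i. Suc i < length (y # zs) \<longrightarrow> R ((y # zs) ! i) ((y # zs) ! Suc i)"
      using h by (metis Suc_less_eq length_Cons nth_Cons_Suc)
    ultimately show "wlk R (x # y # zs)" using 3 by auto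
  qed
qed auto

lemma ped_nth: "ped xs = {{xs ! i, xs ! Suc i} | i. Suc i < length xs}"
proof (induction xs rule: induct_list012)
  case (3 x y zs)
  have "{{(x # y # zs) ! i, (x # y # zs) ! Suc i} | i. Suc i < length (x # y # zs)} =
        insert {x, y} {{(y # zs) ! i, (y # zs) ! Suc i} | i. Suc i < length (y # zs)}"
    (is "?A = ?B")
  proof
    show "?A \<subseteq> ?B"
    proof
      fix e assume "e \<in> ?A"
      then obtain i where i: "e = {(x # y # zs) ! i, (x # y # zs) ! Suc i}" "Suc i < length (x # y # zs)" by auto
      show "e \<in> ?B"
      proof (cases i)
        case 0 then show ?thesis using i by auto
      next
        case (Suc j) then show ?thesis using i by auto
      qed
    qed
  next
    show "?B \<subseteq> ?A"
    proof
      fix e assume "e \<in> ?B"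
      then consider "e = {x, y}" | j where "e = {(y # zs) ! j, (y # zs) ! Suc j}" "Suc j < length (y # zs)" by auto
      then show "e \<in> ?A"
      proof cases
        case 1 then show ?thesis by (auto intro!: exI[of _ 0])
      next
        case 2 then show ?thesis by (auto intro!: exI[of _ "Suc j"])
      qed
    qed
  qed
  then show ?case using 3 by simp
qed auto


lemma snoc_hd_nth:
  assumes "cs \<noteq> []" "i < length cs"
  shows "(cs @ [hd cs]) ! i = cs ! i" "(cs @ [hd cs]) ! Suc i = cs ! ((i + 1) mod length cs)"
proof -
  show "(cs @ [hd cs]) ! i = cs ! i" using assms by (simp add: nth_append)
  show "(cs @ [hd cs]) ! Suc i = cs ! ((i + 1) mod length cs)"
  proof (cases "Suc i < length cs")
    case True then show ?thesis by (simp add: nth_append)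
  next
    case False
    then have "Suc i = length cs" using assms by simp
    then show ?thesis using assms by (simp add: nth_append hd_conv_nth)
  qed
qed

lemma cycle_edges_eq: "cs \<noteq> [] \<Longrightarrow> cycle_edges cs = ped (cs @ [hd cs])"
proof -
  assume ne: "cs \<noteq> []"
  have "ped (cs @ [hd cs]) = {{(cs @ [hd cs]) ! i, (cs @ [hd cs]) ! Suc i} | i. Suc i < length (cs @ [hd cs])}"
    by (rule ped_nth)
  also have "\<dots> = {{cs ! i, cs ! ((i + 1) mod length cs)} | i. i < length cs}"
    using snoc_hd_nth[OF ne] by (auto; metis)
  finally show ?thesis unfolding cycle_edges_def by simp
qed

lemma is_cycle_iff: "is_cycle V E cs \<longleftrightarrow> 3 \<le> length cs \<and> distinct cs \<and> set cs \<subseteq> V \<and> wlk E (cs @ [hd cs])"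
proof (cases "cs = []")
  case True then show ?thesis by (simp add: is_cycle_def)
next
  case ne: False
  have "wlk E (cs @ [hd cs]) \<longleftrightarrow> (\<forall>i. Suc i < length (cs @ [hd cs]) \<longrightarrow> E ((cs @ [hd cs]) ! i) ((cs @ [hd cs]) ! Suc i))"
    by (simp add: wlk_nth)
  also have "\<dots> \<longleftrightarrow> (\<forall>i < length cs. E (cs ! i) (cs ! ((i + 1) mod length cs)))"
    using snoc_hd_nth[OF ne] by auto
  finally show ?thesis unfolding is_cycle_def by auto
qed

locale sgraph =
  fixes V :: "'a set" and E :: "'a \<Rightarrow> 'a \<Rightarrow> bool"
  assumes sg: "simple_graph V E"
begin

lemma E_V: "E u v \<Longrightarrow> u \<in> V" "E u v \<Longrightarrow> v \<in> V"
  using sg unfolding simple_graph_def by blast+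

lemma E_sym: "E u v \<Longrightarrow> E v u"
  using sg unfolding simple_graph_def by blast

lemma E_irr: "E u v \<Longrightarrow> u \<noteq> v"
  using sg unfolding simple_graph_def by blast

lemma wlk_V: "wlk E xs \<Longrightarrow> 2 \<le> length xs \<Longrightarrow> set xs \<subseteq> V"
proof (induction xs rule: induct_list012)
  case (3 x y zs)
  then show ?case using E_V by (cases zs) auto
qed auto

lemma edges_iff: "{u, v} \<in> edges V E \<longleftrightarrow> E u v"
proof
  assume "{u, v} \<in> edges V E"
  then obtain a b where "{u, v} = {a, b}" "E a b" unfolding edges_def by blast
  then show "E u v" using E_sym by (metis doubleton_eq_iff)
next
  assume "E u v" then show "{u, v} \<in> edges V E" unfolding edges_def using E_V by blast
qed

lemma edgesE: "e \<in> edges V E \<Longrightarrow> (\<And>u v. e = {u, v} \<Longrightarrow> E u v \<Longrightarrow> thesis) \<Longrightarrow> thesis"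
  unfolding edges_def by blast

lemma cycle_rot:
  assumes "is_cycle V E (as @ bs)"
  shows "is_cycle V E (bs @ as)" "cycle_edges (bs @ as) = cycle_edges (as @ bs)"
proof -
  have "is_cycle V E (bs @ as) \<and> cycle_edges (bs @ as) = cycle_edges (as @ bs)"
  proof (cases "as = [] \<or> bs = []")
    case True then show ?thesis using assms by auto
  next
    case False
    then have ne: "as \<noteq> []" "bs \<noteq> []" by auto
    have w: "wlk E (as @ bs @ [hd as])" using assms ne by (simp add: is_cycle_iff)
    have "as @ bs @ [hd as] = as @ hd bs # (tl bs @ [hd as])" using ne by simp
    then have w1: "wlk E (as @ [hd bs])" and w2: "wlk E (hd bs # tl bs @ [hd as])"
      using w wlk_append by metis+
    have w2': "wlk E (bs @ [hd as])" using w2 ne by (metis append_Cons list.collapse)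
    have "bs @ as @ [hd bs] = bs @ hd as # (tl as @ [hd bs])" using ne by simp
    moreover have "wlk E (hd as # tl as @ [hd bs])" using w1 ne by (metis append_Cons list.collapse)
    ultimately have "wlk E ((bs @ as) @ [hd (bs @ as)])"
      using w2' wlk_append ne by (metis append.assoc hd_append2)
    then have c: "is_cycle V E (bs @ as)" using assms by (auto simp: is_cycle_iff)
    have "cycle_edges (as @ bs) = ped (as @ bs @ [hd as])" using ne by (simp add: cycle_edges_eq)
    also have "\<dots> = ped (as @ [hd bs]) \<union> ped (bs @ [hd as])"
      using ped_append[of as "hd bs" "tl bs @ [hd as]"] ne by (metis append_Cons list.collapse)
    finally have e1: "cycle_edges (as @ bs) = ped (as @ [hd bs]) \<union> ped (bs @ [hd as])" .
    have "cycle_edges (bs @ as) = ped (bs @ as @ [hd bs])" using ne by (simp add: cycle_edges_eq)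
    also have "\<dots> = ped (bs @ [hd as]) \<union> ped (as @ [hd bs])"
      using ped_append[of bs "hd as" "tl as @ [hd bs]"] ne by (metis append_Cons list.collapse)
    finally show ?thesis using e1 c by auto
  qed
  then show "is_cycle V E (bs @ as)" "cycle_edges (bs @ as) = cycle_edges (as @ bs)" by auto
qed

lemma cycle_at_vertex:
  assumes "is_cycle V E cs" "c \<in> set cs"
  obtains zs where "is_cycle V E (c # zs)" "cycle_edges (c # zs) = cycle_edges cs" "set (c # zs) = set cs"
proof -
  obtain as bs where "cs = as @ c # bs" using assms(2) by (meson split_list)
  then show ?thesis using cycle_rot[of as "c # bs"] assms that[of "bs @ as"] by auto
qed

lemma cycle_at_edge:
  assumes "is_cycle V E cs" "e \<in> cycle_edges cs"
  obtains a zs where "is_cycle V E (a # zs)" "cycle_edges (a # zs) = cycle_edges cs"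
    "set (a # zs) = set cs" "e = {last (a # zs), a}"
proof -
  obtain i where i: "i < length cs" "e = {cs ! i, cs ! ((i + 1) mod length cs)}"
    using assms(2) unfolding cycle_edges_def by auto
  show ?thesis
  proof (cases "Suc i < length cs")
    case True
    let ?as = "take (Suc i) cs" and ?bs = "drop (Suc i) cs"
    have c: "is_cycle V E (?bs @ ?as)" "cycle_edges (?bs @ ?as) = cycle_edges cs"
      using cycle_rot[of ?as ?bs] assms(1) by auto
    have "?bs = cs ! Suc i # drop (Suc (Suc i)) cs" using True by (simp add: Cons_nth_drop_Suc)
    moreover have "last (?bs @ ?as) = cs ! i"
    proof -
      have "last (?bs @ ?as) = last ?as" using True by (simp add: last_append)
      also have "\<dots> = ?as ! (length ?as - 1)" using True by (intro last_conv_nth) auto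
      also have "length ?as - 1 = i" using True by simp
      finally show ?thesis using True by simp
    qed
    moreover have "set (?bs @ ?as) = set cs" by (metis set_append append_take_drop_id Un_commute)
    ultimately show ?thesis using c i True that[of "cs ! Suc i" "drop (Suc (Suc i)) cs @ ?as"]
      by (auto simp: insert_commute)
  next
    case False
    then have si: "Suc i = length cs" using i by simp
    have ne: "cs \<noteq> []" using i by auto
    have "cs = hd cs # tl cs" using ne by simp
    moreover have "last cs = cs ! i" using si ne by (simp add: last_conv_nth flip: si)
    moreover have "cs ! ((i + 1) mod length cs) = hd cs" using si ne by (simp add: hd_conv_nth)
    ultimately show ?thesis using that[of "hd cs" "tl cs"] assms(1) i
      by (metis insert_commute)
  qed
qed

lemma glue_cycle:
  assumes "wlk E (u # xs @ [v])" "wlk E (v # ys @ [u])" "distinct (u # xs @ v # ys)" "xs @ ys \<noteq> []"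
  shows "is_cycle V E (u # xs @ v # ys)"
    "cycle_edges (u # xs @ v # ys) = ped (u # xs @ [v]) \<union> ped (v # ys @ [u])"
proof -
  have eq: "(u # xs @ v # ys) @ [hd (u # xs @ v # ys)] = (u # xs) @ v # (ys @ [u])" by simp
  have w: "wlk E ((u # xs @ v # ys) @ [hd (u # xs @ v # ys)])"
    unfolding eq using wlk_append assms(1,2) by (metis append_Cons)
  have "set ((u # xs @ v # ys) @ [hd (u # xs @ v # ys)]) \<subseteq> V"
    using wlk_V[OF w] by simp
  moreover have "length xs + length ys \<ge> 1" using assms(4) by (cases xs; cases ys) auto
  ultimately show "is_cycle V E (u # xs @ v # ys)" using w assms(3,4) by (auto simp: is_cycle_iff)
  show "cycle_edges (u # xs @ v # ys) = ped (u # xs @ [v]) \<union> ped (v # ys @ [u])"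
    using cycle_edges_eq[of "u # xs @ v # ys"] eq ped_append[of "u # xs" v "ys @ [u]"] by simp
qed

end

lemma wlk_last_step: "wlk R (xs @ [y]) \<Longrightarrow> xs \<noteq> [] \<Longrightarrow> R (last xs) y"
proof -
  assume a: "wlk R (xs @ [y])" "xs \<noteq> []"
  then have "xs @ [y] = butlast xs @ [last xs, y]" by simp
  then have "wlk R [last xs, y]" using a wlk_suffix by (metis list.distinct(1))
  then show ?thesis by simp
qed

context sgraph begin

lemma ped_E: "wlk E xs \<Longrightarrow> {p, q} \<in> ped xs \<Longrightarrow> E p q"
  using wlk_ped[of E xs "{p,q}"] E_sym by (metis doubleton_eq_iff)

lemma ped_set: "wlk E xs \<Longrightarrow> {p, q} \<in> ped xs \<Longrightarrow> p \<in> set xs \<and> q \<in> set xs"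
  using wlk_ped[of E xs "{p,q}"] by (metis doubleton_eq_iff)

lemma cycle_trans:
  assumes C: "is_cycle V E cs" "e1 \<in> cycle_edges cs" "e2 \<in> cycle_edges cs"
    and D: "is_cycle V E ds" "e2 \<in> cycle_edges ds" "e3 \<in> cycle_edges ds"
    and n3: "e3 \<notin> cycle_edges cs"
  shows "\<exists>fs. is_cycle V E fs \<and> e1 \<in> cycle_edges fs \<and> e3 \<in> cycle_edges fs"
proof -
  obtain a zs where D': "is_cycle V E (a # zs)" "cycle_edges (a # zs) = cycle_edges ds"
    "e3 = {last (a # zs), a}"
    using cycle_at_edge[OF D(1) D(3)] by metis
  define w where "w = a # zs"
  define x where "x = last w"
  have cw: "wlk E (w @ [a])" "distinct w" using D'(1) unfolding w_def by (auto simp: is_cycle_iff)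
  have ww: "wlk E w" using wlk_prefix[OF cw(1)] w_def by simp
  have xa: "E x a" using wlk_last_step[OF cw(1)] w_def x_def by simp
  have "cycle_edges (a # zs) = ped (w @ [a])" using w_def cycle_edges_eq[of "a # zs"] by simp
  also have "\<dots> = ped w \<union> ped [a] \<union> {{last w, hd [a]}}" using ped_concat[of w "[a]"] w_def by simp
  finally have ced: "cycle_edges ds = ped w \<union> {e3}" using D'(2,3) w_def by (simp add: x_def)
  have "e2 \<noteq> e3" using n3 C(3) by auto
  then have e2w: "e2 \<in> ped w" using ced D(2) by auto
  obtain p q where pq: "e2 = {p, q}" "E p q" "p \<in> set w" "q \<in> set w"
    using wlk_ped[OF ww e2w] by blast
  have ccs: "wlk E (cs @ [hd cs])" "distinct cs" "cs \<noteq> []" using C(1) by (auto simp: is_cycle_iff)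
  have "cycle_edges cs = ped (cs @ [hd cs])" using cycle_edges_eq[OF ccs(3)] .
  then have "p \<in> set cs \<and> q \<in> set cs" using ped_set[OF ccs(1)] C(3) pq(1) ccs(3) hd_in_set[OF ccs(3)] by (metis Un_insert_right insert_iff set_append sup_bot.right_neutral list.set(1) list.set(2) insert_absorb)
  then have pqc: "p \<in> set cs" "q \<in> set cs" by auto
  have "p \<noteq> q" using pq(2) E_irr by auto
  obtain w1 c1 w2 where sp1: "w = w1 @ c1 # w2" "c1 \<in> set cs" "\<forall>y\<in>set w1. y \<notin> set cs"
    using split_list_first_prop[of w "\<lambda>y. y \<in> set cs"] pq(3) pqc(1) by blast
  have "\<exists>y\<in>set w2. y \<in> set cs"
  proof (cases "p = c1")
    case True
    then have "q \<noteq> c1" using \<open>p \<noteq> q\<close> by simp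
    then show ?thesis using pq(4) pqc(2) sp1 by auto
  next
    case False
    then show ?thesis using pq(3) pqc(1) sp1 by auto
  qed
  then obtain w3 c2 w4 where sp2: "w2 = w3 @ c2 # w4" "c2 \<in> set cs" "\<forall>y\<in>set w4. y \<notin> set cs"
    using split_list_last_prop[of w2 "\<lambda>y. y \<in> set cs"] by blast
  have wsplit: "w = w1 @ c1 # w3 @ c2 # w4" using sp1 sp2 by simp
  have c12: "c1 \<noteq> c2" using cw(2) wsplit by auto
  have dw: "distinct (w1 @ c1 # w3 @ c2 # w4)" using cw(2) wsplit by simp
  have wP1: "wlk E (c2 # w4)" using ww wsplit wlk_suffix[of E "w1 @ c1 # w3" "c2 # w4"] by simp
  have wP2: "wlk E (w1 @ [c1])" using ww wsplit wlk_prefix[of E "w1 @ [c1]" "w3 @ c2 # w4"] by simp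
  have lx: "last (c2 # w4) = x" using x_def wsplit by simp
  have ha: "hd (w1 @ [c1]) = a" using w_def wsplit by (cases w1) auto
  have wP: "wlk E (c2 # (w4 @ w1) @ [c1])"
    using wlk_concat[OF wP1 wP2] lx ha xa by simp
  have pedP: "ped (c2 # (w4 @ w1) @ [c1]) = ped (c2 # w4) \<union> ped (w1 @ [c1]) \<union> {e3}"
    using ped_concat[of "c2 # w4" "w1 @ [c1]"] lx ha D'(3) w_def x_def by simp
  obtain rs where R: "is_cycle V E (c1 # rs)" "cycle_edges (c1 # rs) = cycle_edges cs" "set (c1 # rs) = set cs"
    using cycle_at_vertex[OF C(1) sp1(2)] by metis
  have "c2 \<in> set rs" using R(3) sp2(2) c12 by auto
  then obtain r1 r2 where rs: "rs = r1 @ c2 # r2" by (meson split_list)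
  have cR: "wlk E (c1 # r1 @ c2 # r2 @ [c1])" "distinct (c1 # r1 @ c2 # r2)"
    using R(1) rs by (auto simp: is_cycle_iff)
  have ceR: "cycle_edges cs = ped (c1 # r1 @ [c2]) \<union> ped (c2 # r2 @ [c1])"
    using R(2) cycle_edges_eq[of "c1 # rs"] rs ped_append[of "c1 # r1" c2 "r2 @ [c1]"] by simp
  have wA: "wlk E (c1 # r1 @ [c2])" "wlk E (c2 # r2 @ [c1])"
    using cR(1) wlk_append[of E "c1 # r1" c2 "r2 @ [c1]"] by auto
  have wB: "wlk E (c1 # rev r2 @ [c2])"
    using wlk_rev[OF _ wA(2)] E_sym by auto
  have pB: "ped (c1 # rev r2 @ [c2]) = ped (c2 # r2 @ [c1])"
    using ped_rev[of "c2 # r2 @ [c1]"] by simp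
  obtain xs where arc: "wlk E (c1 # xs @ [c2])" "e1 \<in> ped (c1 # xs @ [c2])" "set xs \<subseteq> set cs"
    "distinct (c1 # xs @ [c2])" "ped (c1 # xs @ [c2]) \<subseteq> cycle_edges cs"
  proof (cases "e1 \<in> ped (c1 # r1 @ [c2])")
    case True
    then show ?thesis using that[of r1] wA(1) cR(2) ceR R(3) rs by auto
  next
    case False
    then have "e1 \<in> ped (c1 # rev r2 @ [c2])" using ceR C(2) pB by auto
    then show ?thesis using that[of "rev r2"] wB cR(2) ceR R(3) rs pB by auto
  qed
  have dist: "distinct (c1 # xs @ c2 # w4 @ w1)"
    using arc(3,4) dw sp1(3) sp2(3) sp1(2) sp2(2) by auto
  have ne: "xs @ w4 @ w1 \<noteq> []"
  proof
    assume "xs @ w4 @ w1 = []"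
    then have "xs = []" "w4 = []" "w1 = []" by auto
    then have "e3 \<in> ped [c2, c1]" "ped [c1, c2] \<subseteq> cycle_edges cs"
      using pedP arc(5) by auto
    then show False using n3 by (auto simp: insert_commute)
  qed
  have gl: "is_cycle V E (c1 # xs @ c2 # w4 @ w1)"
    "cycle_edges (c1 # xs @ c2 # w4 @ w1) = ped (c1 # xs @ [c2]) \<union> ped (c2 # (w4 @ w1) @ [c1])"
    using glue_cycle[OF arc(1) wP _ ] dist ne by auto
  show ?thesis using gl arc(2) pedP by (intro exI[of _ "c1 # xs @ c2 # w4 @ w1"]) auto
qed

lemma edge_rel_sym: "edge_rel V E a b \<Longrightarrow> edge_rel V E b a"
  unfolding edge_rel_def by blast

lemma edge_rel_trans:
  assumes "edge_rel V E e1 e2" "edge_rel V E e2 e3"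
  shows "edge_rel V E e1 e3"
proof (cases "e1 = e2 \<or> e2 = e3")
  case True then show ?thesis using assms by auto
next
  case False
  then obtain cs ds where "is_cycle V E cs" "e1 \<in> cycle_edges cs" "e2 \<in> cycle_edges cs"
    "is_cycle V E ds" "e2 \<in> cycle_edges ds" "e3 \<in> cycle_edges ds"
    using assms unfolding edge_rel_def by blast
  then show ?thesis using cycle_trans unfolding edge_rel_def by metis
qed

end

lemma rtranclp_sym:
  assumes s: "\<And>u v. R u v \<Longrightarrow> R v u" and h: "R\<^sup>*\<^sup>* x y" shows "R\<^sup>*\<^sup>* y x"
  using h
  proof (induction rule: rtranclp_induct)
    case (step y z)
    have "R z y" using s step(2) .
    then show ?case using step(3) by (rule converse_rtranclp_into_rtranclp)
  qed simp

lemma first_hit: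
  assumes "R\<^sup>*\<^sup>* x y"
  shows "(\<lambda>u v. R u v \<and> {u, v} \<notin> L)\<^sup>*\<^sup>* x y \<or> (\<exists>a\<in>\<Union>L. (\<lambda>u v. R u v \<and> {u, v} \<notin> L)\<^sup>*\<^sup>* x a)"
  using assms
proof (induction rule: rtranclp_induct)
  case base then show ?case by simp
next
  case (step y z)
  from step.IH show ?case
  proof (elim disjE)
    assume h: "(\<lambda>u v. R u v \<and> {u, v} \<notin> L)\<^sup>*\<^sup>* x y"
    show ?thesis
    proof (cases "{y, z} \<in> L")
      case True then have "y \<in> \<Union>L" by blast
      then show ?thesis using h by blast
    next
      case False then show ?thesis using h step(2) by (auto intro: rtranclp.rtrancl_into_rtrancl)
    qed
  qed blast
qed

context sgraph begin

definition cls :: "'a set \<Rightarrow> 'a set set" where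
  "cls f = {e' \<in> edges V E. edge_rel V E f e'}"

abbreviation LL where "LL \<equiv> lobes V E"

definition LE :: "'a set set \<Rightarrow> 'a \<Rightarrow> 'a \<Rightarrow> bool" where
  "LE L u v \<longleftrightarrow> {u, v} \<in> L"

definition NL :: "'a set set \<Rightarrow> 'a \<Rightarrow> 'a \<Rightarrow> bool" where
  "NL L u v \<longleftrightarrow> E u v \<and> {u, v} \<notin> L"

lemma lobes_iff: "L \<in> LL \<longleftrightarrow> (\<exists>e\<in>edges V E. L = cls e)"
  unfolding lobes_def cls_def by blast

lemma cls_self: "e \<in> edges V E \<Longrightarrow> e \<in> cls e"
  unfolding cls_def edge_rel_def by auto

lemma lobe_sub: "L \<in> LL \<Longrightarrow> L \<subseteq> edges V E"
  unfolding lobes_iff cls_def by auto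

lemma lobe_cls: "L \<in> LL \<Longrightarrow> f \<in> L \<Longrightarrow> L = cls f"
proof -
  assume "L \<in> LL" "f \<in> L"
  then obtain e where e: "e \<in> edges V E" "L = cls e" by (auto simp: lobes_iff)
  then have ef: "edge_rel V E e f" using \<open>f \<in> L\<close> unfolding cls_def by auto
  show "L = cls f" unfolding e(2) cls_def
    using ef edge_rel_trans edge_rel_sym by blast
qed

lemma lobes_disj: "L1 \<in> LL \<Longrightarrow> L2 \<in> LL \<Longrightarrow> f \<in> L1 \<Longrightarrow> f \<in> L2 \<Longrightarrow> L1 = L2"
  using lobe_cls by metis

lemma edge_lobe: "e \<in> edges V E \<Longrightarrow> cls e \<in> LL"
  unfolding lobes_iff by blast

lemma ped_edges: "wlk E xs \<Longrightarrow> ped xs \<subseteq> edges V E"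
  using wlk_ped[of E xs] edges_iff by blast

lemma cycle_edges_sub: "is_cycle V E cs \<Longrightarrow> cycle_edges cs \<subseteq> edges V E"
  using ped_edges cycle_edges_eq by (metis is_cycle_iff list.size(3) not_numeral_le_zero)

lemma cycle_in_lobe:
  assumes "L \<in> LL" "is_cycle V E cs" "f \<in> cycle_edges cs" "f \<in> L"
  shows "cycle_edges cs \<subseteq> L"
proof
  fix g assume g: "g \<in> cycle_edges cs"
  have "L = cls f" using lobe_cls assms by blast
  moreover have "edge_rel V E f g" using assms g unfolding edge_rel_def by blast
  moreover have "g \<in> edges V E" using cycle_edges_sub assms(2) g by blast
  ultimately show "g \<in> L" unfolding cls_def by blast
qed

lemma LE_E: "L \<in> LL \<Longrightarrow> LE L u v \<Longrightarrow> E u v"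
  unfolding LE_def using lobe_sub edges_iff by blast

lemma LE_sym: "LE L u v \<Longrightarrow> LE L v u"
  unfolding LE_def by (simp add: insert_commute)

lemma NL_sym: "NL L u v \<Longrightarrow> NL L v u"
  unfolding NL_def using E_sym by (simp add: insert_commute)

lemma LE_VL: "LE L u v \<Longrightarrow> u \<in> \<Union>L \<and> v \<in> \<Union>L"
  unfolding LE_def by blast

lemma wlk_LE_ped: "wlk (LE L) xs \<Longrightarrow> ped xs \<subseteq> L"
  using wlk_ped[of "LE L" xs] unfolding LE_def by blast

lemma wlk_NL_ped: "wlk (NL L) xs \<Longrightarrow> ped xs \<inter> L = {}"
  using wlk_ped[of "NL L" xs] unfolding NL_def by blast

lemma wlk_LE_set: "wlk (LE L) xs \<Longrightarrow> 2 \<le> length xs \<Longrightarrow> set xs \<subseteq> \<Union>L"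
proof (induction xs rule: induct_list012)
  case (3 x y zs)
  then show ?case using LE_VL by (cases zs) auto
qed auto

lemma lobe_conn:
  assumes L: "L \<in> LL" and u: "u \<in> \<Union>L" and v: "v \<in> \<Union>L"
  shows "(LE L)\<^sup>*\<^sup>* u v"
proof -
  obtain e where e: "e \<in> edges V E" "L = cls e" using L by (auto simp: lobes_iff)
  obtain a b where ab: "e = {a, b}" "E a b" using e(1) by (auto elim: edgesE)
  have eL: "e \<in> L" using e cls_self by auto
  have key: "(LE L)\<^sup>*\<^sup>* a z" if z: "z \<in> \<Union>L" for z
  proof -
    obtain f where f: "f \<in> L" "z \<in> f" using z by blast
    have er: "edge_rel V E e f" using f e unfolding cls_def by auto
    show ?thesis
    proof (cases "e = f")
      case True
      then have "z = a \<or> z = b" using f ab by auto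
      moreover have "LE L a b" using eL ab unfolding LE_def by simp
      ultimately show ?thesis by auto
    next
      case False
      then obtain cs where cs: "is_cycle V E cs" "e \<in> cycle_edges cs" "f \<in> cycle_edges cs"
        using er unfolding edge_rel_def by blast
      have sub: "cycle_edges cs \<subseteq> L" using cycle_in_lobe[OF L cs(1,2) eL] .
      have "cs \<noteq> []" using cs(1) by (auto simp: is_cycle_iff)
      then have ce: "cycle_edges cs = ped (cs @ [hd cs])" using cycle_edges_eq by blast
      have wc: "wlk E (cs @ [hd cs])" using cs(1) by (auto simp: is_cycle_iff)
      have aset: "a \<in> set (cs @ [hd cs])" using ped_set[OF wc, of a b] cs(2) ce ab by auto
      have zset: "z \<in> set (cs @ [hd cs])"
      proof -
        have "f \<in> edges V E" using f(1) lobe_sub[OF L] by blast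
        then obtain p q where "f = {p, q}" "E p q" by (auto elim: edgesE)
        then show ?thesis using ped_set[OF wc, of p q] cs(3) ce f(2) by auto
      qed
      have wL: "wlk (LE L) (cs @ [hd cs])"
        using wlk_mono[OF wc, of "LE L"] sub ce unfolding LE_def by auto
      have h1: "(LE L)\<^sup>*\<^sup>* (hd (cs @ [hd cs])) a" using wlk_rtranclp_all[OF wL aset] .
      have h2: "(LE L)\<^sup>*\<^sup>* (hd (cs @ [hd cs])) z" using wlk_rtranclp_all[OF wL zset] .
      show ?thesis using rtranclp_sym[of "LE L", OF LE_sym h1] h2 by auto
    qed
  qed
  show ?thesis using key[OF u] key[OF v] rtranclp_sym[of "LE L", OF LE_sym] by (meson rtranclp_trans)
qed

lemma no_bypass:
  assumes L: "L \<in> LL" and a: "a \<in> \<Union>L" and b: "b \<in> \<Union>L" and p: "(NL L)\<^sup>*\<^sup>* a b"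
  shows "a = b"
proof (rule ccontr)
  assume ab: "a \<noteq> b"
  obtain xs where "wlk (NL L) xs" "hd xs = a" "last xs = b" using rtranclp_wlk[OF p] by blast
  then obtain ps where ps: "wlk (NL L) ps" "distinct ps" "hd ps = a" "last ps = b"
    using wlk_shortcut by metis
  have "ps \<noteq> []" using ps(1) by auto
  then obtain ps' where ps': "ps = a # ps'" using ps(3) by (cases ps) auto
  have "b \<in> set ps'" using ps' ps(4) ab by (cases ps') auto
  then obtain q1 c q2 where sp: "ps' = q1 @ c # q2" "c \<in> \<Union>L" "\<forall>y\<in>set q1. y \<notin> \<Union>L"
    using split_list_first_prop[of ps' "\<lambda>y. y \<in> \<Union>L"] b by blast
  have ca: "c \<noteq> a" using ps(2) ps' sp(1) by auto
  have wq: "wlk (NL L) (a # q1 @ [c])"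
    using ps(1) ps' sp(1) wlk_prefix[of "NL L" "a # q1 @ [c]" q2] by simp
  have dq: "distinct (a # q1 @ [c])" using ps(2) ps' sp(1) by auto
  obtain ys where "wlk (LE L) ys" "hd ys = c" "last ys = a"
    using rtranclp_wlk[OF lobe_conn[OF L sp(2) a]] by blast
  then obtain rs where rs: "wlk (LE L) rs" "distinct rs" "hd rs = c" "last rs = a"
    using wlk_shortcut by metis
  have "rs \<noteq> []" using rs(1) by auto
  then obtain r where r: "rs = c # r @ [a]" using rs(3,4) ca
    by (metis append_butlast_last_id hd_Cons_tl last.simps list.sel(1) butlast.simps(2) hd_append2 list.collapse
        append_Nil)
  have rL: "set r \<subseteq> \<Union>L" using wlk_LE_set[OF rs(1)] r by auto
  have dist: "distinct (a # q1 @ c # r)" using dq rs(2) r rL sp(3) by auto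
  have ne: "q1 @ r \<noteq> []"
  proof
    assume "q1 @ r = []"
    then have "NL L a c" "LE L c a" using wq rs(1) r by auto
    then show False unfolding NL_def LE_def by (simp add: insert_commute)
  qed
  have wqE: "wlk E (a # q1 @ [c])" using wlk_mono[OF wq] unfolding NL_def by auto
  have wrE: "wlk E (c # r @ [a])" using wlk_mono[OF rs(1)] LE_E[OF L] r by auto
  have gl: "is_cycle V E (a # q1 @ c # r)"
    "cycle_edges (a # q1 @ c # r) = ped (a # q1 @ [c]) \<union> ped (c # r @ [a])"
    using glue_cycle[OF wqE wrE dist ne] by auto
  have f: "{c, hd (r @ [a])} \<in> ped (c # r @ [a])" by (cases r) auto
  have fL: "{c, hd (r @ [a])} \<in> L" using f wlk_LE_ped[OF rs(1)] r by auto
  have g: "{a, hd (q1 @ [c])} \<in> ped (a # q1 @ [c])" by (cases q1) auto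
  have gL: "{a, hd (q1 @ [c])} \<notin> L" using g wlk_NL_ped[OF wq] by auto
  have "cycle_edges (a # q1 @ c # r) \<subseteq> L"
    using cycle_in_lobe[OF L gl(1) _ fL] gl(2) f by auto
  then show False using gl(2) g gL by auto
qed

end

locale cgraph = sgraph +
  assumes conn: "connected_graph V E"
begin

lemma VL_V: "L \<in> LL \<Longrightarrow> \<Union>L \<subseteq> V"
  using lobe_sub edges_def E_V by (auto simp: edges_def)

lemma VL_ne: "L \<in> LL \<Longrightarrow> \<exists>a b. a \<noteq> b \<and> a \<in> \<Union>L \<and> b \<in> \<Union>L \<and> {a, b} \<in> L"
proof -
  assume "L \<in> LL"
  then obtain e where e: "e \<in> edges V E" "L = cls e" by (auto simp: lobes_iff)
  then obtain a b where "e = {a, b}" "E a b" by (auto elim: edgesE)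
  then show ?thesis using e cls_self E_irr by blast
qed

lemma NL_eq: "(\<lambda>u v. E u v \<and> {u, v} \<notin> L) = NL L"
  unfolding NL_def by (intro ext) simp

lemma att_ex: "L \<in> LL \<Longrightarrow> x \<in> V \<Longrightarrow> \<exists>a\<in>\<Union>L. (NL L)\<^sup>*\<^sup>* x a"
proof -
  assume L: "L \<in> LL" and x: "x \<in> V"
  obtain b where b: "b \<in> \<Union>L" using VL_ne[OF L] by blast
  then have "b \<in> V" using VL_V[OF L] by blast
  then have "E\<^sup>*\<^sup>* x b" using conn x unfolding connected_graph_def by blast
  from first_hit[OF this, of L] show ?thesis unfolding NL_eq using b by blast
qed

lemma att_uniq: "L \<in> LL \<Longrightarrow> a \<in> \<Union>L \<Longrightarrow> a' \<in> \<Union>L \<Longrightarrow> (NL L)\<^sup>*\<^sup>* x a \<Longrightarrow> (NL L)\<^sup>*\<^sup>* x a' \<Longrightarrow> a = a'"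
  using no_bypass rtranclp_sym[of "NL L", OF NL_sym] by (meson rtranclp_trans)

lemma LE_NL: "L1 \<in> LL \<Longrightarrow> L2 \<in> LL \<Longrightarrow> L1 \<noteq> L2 \<Longrightarrow> LE L1 u v \<Longrightarrow> NL L2 u v"
  unfolding NL_def using LE_E lobes_disj unfolding LE_def by blast

lemma conn_NL: "L1 \<in> LL \<Longrightarrow> L2 \<in> LL \<Longrightarrow> L1 \<noteq> L2 \<Longrightarrow> u \<in> \<Union>L1 \<Longrightarrow> v \<in> \<Union>L1 \<Longrightarrow> (NL L2)\<^sup>*\<^sup>* u v"
  using lobe_conn[of L1 u v] LE_NL[of L1 L2] by (metis (no_types, lifting) mono_rtranclp)

lemma lobes_meet: "L1 \<in> LL \<Longrightarrow> L2 \<in> LL \<Longrightarrow> L1 \<noteq> L2 \<Longrightarrow> a \<in> \<Union>L1 \<Longrightarrow> a \<in> \<Union>L2 \<Longrightarrow>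
   b \<in> \<Union>L1 \<Longrightarrow> b \<in> \<Union>L2 \<Longrightarrow> a = b"
  using conn_NL[of L2 L1 a b] no_bypass[of L1 a b] by auto

lemma vertex_in_lobe: "LL \<noteq> {} \<Longrightarrow> x \<in> V \<Longrightarrow> \<exists>L\<in>LL. x \<in> \<Union>L"
proof -
  assume "LL \<noteq> {}" "x \<in> V"
  then obtain L where L: "L \<in> LL" by blast
  obtain a b where ab: "a \<noteq> b" "a \<in> \<Union>L" "b \<in> \<Union>L" using VL_ne[OF L] by blast
  obtain y where y: "y \<in> \<Union>L" "y \<noteq> x" using ab by blast
  have "y \<in> V" using VL_V[OF L] y by blast
  then have "E\<^sup>*\<^sup>* x y" using conn \<open>x \<in> V\<close> unfolding connected_graph_def by blast
  then obtain z where "E x z" using y(2) by (metis converse_rtranclpE)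
  then have "cls {x, z} \<in> LL" "x \<in> \<Union>(cls {x, z})"
    using edge_lobe cls_self edges_iff by blast+
  then show ?thesis by blast
qed

end

locale rooted = cgraph +
  fixes R :: "'a set set"
  assumes R: "R \<in> lobes V E"
begin

definition par :: "'a set set \<Rightarrow> 'a" where
  "par L = (THE c. c \<in> \<Union>L \<and> (\<exists>r\<in>\<Union>R. (NL L)\<^sup>*\<^sup>* r c))"

lemma par_props:
  assumes L: "L \<in> LL" "L \<noteq> R"
  shows "par L \<in> \<Union>L" "\<And>r. r \<in> \<Union>R \<Longrightarrow> (NL L)\<^sup>*\<^sup>* r (par L)"
proof -
  obtain r0 where r0: "r0 \<in> \<Union>R" using VL_ne[OF R] by blast
  obtain a where a: "a \<in> \<Union>L" "(NL L)\<^sup>*\<^sup>* r0 a" using att_ex[OF L(1)] r0 VL_V[OF R] by blast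
  have all: "(NL L)\<^sup>*\<^sup>* r a" if "r \<in> \<Union>R" for r
    using conn_NL[OF R L(1) L(2)[symmetric] that r0] a(2) by (meson rtranclp_trans)
  have "par L = a" unfolding par_def
  proof (rule the_equality)
    show "a \<in> \<Union>L \<and> (\<exists>r\<in>\<Union>R. (NL L)\<^sup>*\<^sup>* r a)" using a r0 by blast
  next
    fix c assume "c \<in> \<Union>L \<and> (\<exists>r\<in>\<Union>R. (NL L)\<^sup>*\<^sup>* r c)"
    then obtain r where "c \<in> \<Union>L" "r \<in> \<Union>R" "(NL L)\<^sup>*\<^sup>* r c" by blast
    then show "c = a" using att_uniq[OF L(1)] all a(1) by blast
  qed
  then show "par L \<in> \<Union>L" "\<And>r. r \<in> \<Union>R \<Longrightarrow> (NL L)\<^sup>*\<^sup>* r (par L)" using a all by auto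
qed

lemma par_unique: "L \<in> LL \<Longrightarrow> L \<noteq> R \<Longrightarrow> c \<in> \<Union>L \<Longrightarrow> r \<in> \<Union>R \<Longrightarrow> (NL L)\<^sup>*\<^sup>* r c \<Longrightarrow> par L = c"
  using par_props att_uniq by blast

lemma par_meet: "L \<in> LL \<Longrightarrow> L \<noteq> R \<Longrightarrow> c \<in> \<Union>L \<Longrightarrow> c \<in> \<Union>R \<Longrightarrow> par L = c"
  using par_unique by blast

definition d :: "'a \<Rightarrow> nat" where
  "d x = (LEAST n. \<exists>r\<in>\<Union>R. (E ^^ n) r x)"

lemma d_ex: "x \<in> V \<Longrightarrow> \<exists>r\<in>\<Union>R. (E ^^ d x) r x"
proof -
  assume x: "x \<in> V"
  obtain r0 where r0: "r0 \<in> \<Union>R" using VL_ne[OF R] by blast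
  then have "E\<^sup>*\<^sup>* r0 x" using conn x VL_V[OF R] unfolding connected_graph_def by blast
  then obtain n where "(E ^^ n) r0 x" using rtranclp_imp_relpowp by metis
  then have "\<exists>n. \<exists>r\<in>\<Union>R. (E ^^ n) r x" using r0 by blast
  then show ?thesis unfolding d_def by (rule LeastI_ex)
qed

lemma d_min: "r \<in> \<Union>R \<Longrightarrow> (E ^^ n) r x \<Longrightarrow> d x \<le> n"
  unfolding d_def by (rule Least_le) blast

lemma walk_hit_n:
  "(E ^^ n) r y \<Longrightarrow> (NL L)\<^sup>*\<^sup>* r y \<or> (\<exists>m<n. \<exists>a\<in>\<Union>L. (E ^^ m) r a \<and> (NL L)\<^sup>*\<^sup>* r a)"
proof (induction n arbitrary: y)
  case 0 then show ?case by simp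
next
  case (Suc n)
  then obtain z where z: "(E ^^ n) r z" "E z y" by (meson relpowp_Suc_E)
  from Suc.IH[OF z(1)] show ?case
  proof (elim disjE)
    assume h: "(NL L)\<^sup>*\<^sup>* r z"
    show ?thesis
    proof (cases "{z, y} \<in> L")
      case True
      then have "z \<in> \<Union>L" by blast
      then show ?thesis using h z(1) by blast
    next
      case False
      then have "NL L z y" using z(2) unfolding NL_def by simp
      then show ?thesis using h by (meson rtranclp.rtrancl_into_rtrancl)
    qed
  next
    assume "\<exists>m<n. \<exists>a\<in>\<Union>L. (E ^^ m) r a \<and> (NL L)\<^sup>*\<^sup>* r a"
    then show ?thesis using less_SucI by blast
  qed
qed

lemma d_par_less:
  assumes L: "L \<in> LL" "L \<noteq> R" and y: "y \<in> \<Union>L" "y \<noteq> par L"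
  shows "d (par L) < d y"
proof -
  have "y \<in> V" using y VL_V[OF L(1)] by blast
  then obtain r where r: "r \<in> \<Union>R" "(E ^^ d y) r y" using d_ex by blast
  from walk_hit_n[OF r(2), of L] show ?thesis
  proof (elim disjE)
    assume "(NL L)\<^sup>*\<^sup>* r y"
    then have "par L = y" using par_unique[OF L y(1) r(1)] by blast
    then show ?thesis using y(2) by simp
  next
    assume "\<exists>m<d y. \<exists>a\<in>\<Union>L. (E ^^ m) r a \<and> (NL L)\<^sup>*\<^sup>* r a"
    then obtain m a where "m < d y" "a \<in> \<Union>L" "(E ^^ m) r a" "(NL L)\<^sup>*\<^sup>* r a" by blast
    then have "par L = a" "d a \<le> m" using par_unique[OF L _ r(1)] d_min[OF r(1)] by auto
    then show ?thesis using \<open>m < d y\<close> by simp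
  qed
qed

lemma d_zero: "x \<in> \<Union>R \<Longrightarrow> d x = 0"
  using d_min[of x 0 x] by simp

lemma d_zero_iff: "x \<in> V \<Longrightarrow> d x = 0 \<longleftrightarrow> x \<in> \<Union>R"
  using d_ex d_zero by fastforce

lemma owner_ex:
  assumes x: "x \<in> V" "x \<notin> \<Union>R"
  shows "\<exists>L\<in>LL. x \<in> \<Union>L \<and> par L \<noteq> x"
proof -
  obtain r where r: "r \<in> \<Union>R" "(E ^^ d x) r x" using d_ex[OF x(1)] by blast
  have "d x \<noteq> 0" using d_zero_iff x by blast
  then obtain n where n: "d x = Suc n" by (cases "d x") auto
  then obtain z where z: "(E ^^ n) r z" "E z x" using r(2) by (metis relpowp_Suc_E)
  let ?L = "cls {z, x}"
  have L: "?L \<in> LL" "{z, x} \<in> ?L" using z(2) edge_lobe cls_self edges_iff by blast+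
  have xz: "x \<in> \<Union>?L" "z \<in> \<Union>?L" using L(2) by blast+
  have LR: "?L \<noteq> R" using x(2) xz(1) by blast
  have "par ?L \<noteq> x"
  proof
    assume px: "par ?L = x"
    have "z \<noteq> x" using E_irr z(2) by blast
    then have "d x < d z" using d_par_less[OF L(1) LR xz(2)] px by simp
    moreover have "d z \<le> n" using d_min[OF r(1) z(1)] .
    ultimately show False using n by simp
  qed
  then show ?thesis using L xz by blast
qed

lemma owner_uniq:
  assumes L1: "L1 \<in> LL" "x \<in> \<Union>L1" "par L1 \<noteq> x" and L2: "L2 \<in> LL" "x \<in> \<Union>L2" "par L2 \<noteq> x"
    and x: "x \<notin> \<Union>R"
  shows "L1 = L2"
proof (rule ccontr)
  assume ne: "L1 \<noteq> L2"
  have R1: "L1 \<noteq> R" "L2 \<noteq> R" using L1 L2 x by auto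
  obtain r where r: "r \<in> \<Union>R" using VL_ne[OF R] by blast
  have w: "(NL L2)\<^sup>*\<^sup>* r (par L2)" using par_props(2)[OF L2(1) R1(2) r] .
  from first_hit[OF w, of L1] show False
  proof (elim disjE)
    assume h: "(\<lambda>u v. NL L2 u v \<and> {u, v} \<notin> L1)\<^sup>*\<^sup>* r (par L2)"
    have "(NL L1)\<^sup>*\<^sup>* r (par L2)" using h by (rule mono_rtranclp[rule_format, rotated]) (simp add: NL_def)
    moreover have "(NL L1)\<^sup>*\<^sup>* (par L2) x" using conn_NL[OF L2(1) L1(1) ne[symmetric] par_props(1)[OF L2(1) R1(2)] L2(2)] .
    ultimately have "(NL L1)\<^sup>*\<^sup>* r x" by (rule rtranclp_trans)
    then have "par L1 = x" using par_unique[OF L1(1) R1(1) L1(2) r] by blast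
    then show False using L1(3) by simp
  next
    assume "\<exists>a\<in>\<Union>L1. (\<lambda>u v. NL L2 u v \<and> {u, v} \<notin> L1)\<^sup>*\<^sup>* r a"
    then obtain a where a: "a \<in> \<Union>L1" "(\<lambda>u v. NL L2 u v \<and> {u, v} \<notin> L1)\<^sup>*\<^sup>* r a" by blast
    have "(NL L2)\<^sup>*\<^sup>* r a" using a(2) by (rule mono_rtranclp[rule_format, rotated]) simp
    moreover have "(NL L2)\<^sup>*\<^sup>* a x" using conn_NL[OF L1(1) L2(1) ne a(1) L1(2)] .
    ultimately have "(NL L2)\<^sup>*\<^sup>* r x" by (rule rtranclp_trans)
    then have "par L2 = x" using par_unique[OF L2(1) R1(2) L2(2) r] by blast
    then show False using L2(3) by simp
  qed
qed

definition own :: "'a \<Rightarrow> 'a set set" where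
  "own x = (THE L. L \<in> LL \<and> x \<in> \<Union>L \<and> par L \<noteq> x)"

lemma own_props: "x \<in> V \<Longrightarrow> x \<notin> \<Union>R \<Longrightarrow> own x \<in> LL \<and> x \<in> \<Union>(own x) \<and> par (own x) \<noteq> x"
  unfolding own_def using owner_ex owner_uniq by (smt (verit) theI)

lemma own_eq: "L \<in> LL \<Longrightarrow> x \<in> \<Union>L \<Longrightarrow> par L \<noteq> x \<Longrightarrow> x \<notin> \<Union>R \<Longrightarrow> own x = L"
  using own_props owner_uniq VL_V by blast

definition pl :: "'a set set \<Rightarrow> 'a set set" where
  "pl L = (if par L \<in> \<Union>R then R else own (par L))"

lemma own_char: "L \<in> LL \<Longrightarrow> L \<noteq> R \<Longrightarrow> x \<in> \<Union>L \<Longrightarrow> x \<noteq> par L \<Longrightarrow> x \<notin> \<Union>R \<and> own x = L"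
  using par_meet own_eq by metis

lemma pl_props:
  assumes L: "L \<in> LL" "L \<noteq> R"
  shows "pl L \<in> LL" "par L \<in> \<Union>(pl L)" "pl L \<noteq> L" "pl L \<noteq> R \<Longrightarrow> par (pl L) \<noteq> par L"
proof -
  have c: "par L \<in> \<Union>L" using par_props[OF L] by blast
  have "pl L \<in> LL \<and> par L \<in> \<Union>(pl L) \<and> pl L \<noteq> L \<and> (pl L \<noteq> R \<longrightarrow> par (pl L) \<noteq> par L)"
  proof (cases "par L \<in> \<Union>R")
    case True then show ?thesis using R L unfolding pl_def by auto
  next
    case False
    have "par L \<in> V" using c VL_V[OF L(1)] by blast
    then have "own (par L) \<in> LL \<and> par L \<in> \<Union>(own (par L)) \<and> par (own (par L)) \<noteq> par L"
      using own_props False by blast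
    then show ?thesis using False unfolding pl_def by auto
  qed
  then show "pl L \<in> LL" "par L \<in> \<Union>(pl L)" "pl L \<noteq> L" "pl L \<noteq> R \<Longrightarrow> par (pl L) \<noteq> par L" by auto
qed

lemma local_parent:
  assumes L: "L \<in> LL" and M: "M \<in> LL" and ne: "L \<noteq> M" and c: "c \<in> \<Union>L" "c \<in> \<Union>M"
    and cond: "M = R \<or> par M \<noteq> c"
  shows "L \<noteq> R" "par L = c" "pl L = M"
proof -
  show LR: "L \<noteq> R"
  proof
    assume "L = R"
    then have "M \<noteq> R" "par M = c" using ne par_meet[OF M _ c(2)] c(1) by auto
    then show False using cond by simp
  qed
  show pc: "par L = c"
  proof (cases "M = R")
    case True then show ?thesis using par_meet[OF L LR c(1)] c(2) by simp
  next
    case False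
    then have pM: "par M \<noteq> c" using cond by simp
    obtain r where r: "r \<in> \<Union>R" using VL_ne[OF R] by blast
    have w: "(NL M)\<^sup>*\<^sup>* r (par M)" using par_props(2)[OF M False r] .
    from first_hit[OF w, of L] show ?thesis
    proof (elim disjE)
      assume h: "(\<lambda>u v. NL M u v \<and> {u, v} \<notin> L)\<^sup>*\<^sup>* r (par M)"
      have "(NL L)\<^sup>*\<^sup>* r (par M)" using h by (rule mono_rtranclp[rule_format, rotated]) (simp add: NL_def)
      moreover have "(NL L)\<^sup>*\<^sup>* (par M) c"
        using conn_NL[OF M L ne[symmetric] par_props(1)[OF M False] c(2)] .
      ultimately have "(NL L)\<^sup>*\<^sup>* r c" by (rule rtranclp_trans)
      then show ?thesis using par_unique[OF L LR c(1) r] by blast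
    next
      assume "\<exists>a\<in>\<Union>L. (\<lambda>u v. NL M u v \<and> {u, v} \<notin> L)\<^sup>*\<^sup>* r a"
      then obtain a where a: "a \<in> \<Union>L" "(\<lambda>u v. NL M u v \<and> {u, v} \<notin> L)\<^sup>*\<^sup>* r a" by blast
      have "(NL M)\<^sup>*\<^sup>* r a" using a(2) by (rule mono_rtranclp[rule_format, rotated]) simp
      moreover have "(NL M)\<^sup>*\<^sup>* a c" using conn_NL[OF L M ne a(1) c(1)] .
      ultimately have "(NL M)\<^sup>*\<^sup>* r c" by (rule rtranclp_trans)
      then have "par M = c" using par_unique[OF M False c(2) r] by blast
      then show ?thesis using pM by simp
    qed
  qed
  show "pl L = M"
  proof (cases "M = R")
    case True then show ?thesis using c(2) pc unfolding pl_def by simp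
  next
    case False
    then have pM: "par M \<noteq> c" using cond by simp
    have "c \<notin> \<Union>R" using par_meet[OF M False c(2)] pM by blast
    then show ?thesis unfolding pl_def using pc own_eq[OF M c(2) pM] by simp
  qed
qed

definition rk :: "'a set set \<Rightarrow> nat" where
  "rk L = (if L = R then 0 else Suc (d (par L)))"

lemma rk_pl: "L \<in> LL \<Longrightarrow> L \<noteq> R \<Longrightarrow> rk (pl L) < rk L"
proof -
  assume L: "L \<in> LL" "L \<noteq> R"
  show "rk (pl L) < rk L"
  proof (cases "pl L = R")
    case True then show ?thesis using L unfolding rk_def by simp
  next
    case False
    have "d (par (pl L)) < d (par L)"
      using d_par_less[OF pl_props(1)[OF L] False pl_props(2)[OF L]] pl_props(4)[OF L False] by simp
    then show ?thesis using L False unfolding rk_def by simp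
  qed
qed

end

lemma wlk_map: "wlk R xs \<Longrightarrow> (\<And>u v. R u v \<Longrightarrow> R' (f u) (f v)) \<Longrightarrow> wlk R' (map f xs)"
  by (induction xs rule: induct_list012) auto

lemma ped_map: "ped (map f xs) = (\<lambda>e. f ` e) ` ped xs"
  by (induction xs rule: induct_list012) auto

context sgraph begin

abbreviation Aut where "Aut \<equiv> automorphisms V E"

lemma autD: "f \<in> Aut \<Longrightarrow> bij_betw f V V" "f \<in> Aut \<Longrightarrow> u \<in> V \<Longrightarrow> v \<in> V \<Longrightarrow> E u v \<longleftrightarrow> E (f u) (f v)"
  unfolding automorphisms_def by auto

lemma aut_E: "f \<in> Aut \<Longrightarrow> E u v \<Longrightarrow> E (f u) (f v)"
  using autD E_V by blast

lemma aut_V: "f \<in> Aut \<Longrightarrow> x \<in> V \<Longrightarrow> f x \<in> V"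
  using autD(1) bij_betwE by blast

lemma aut_inj: "f \<in> Aut \<Longrightarrow> inj_on f V"
  using autD(1) bij_betw_imp_inj_on by blast

lemma aut_id: "id \<in> Aut"
  unfolding automorphisms_def by auto

lemma aut_comp: "f \<in> Aut \<Longrightarrow> g \<in> Aut \<Longrightarrow> g \<circ> f \<in> Aut"
proof -
  assume f: "f \<in> Aut" and g: "g \<in> Aut"
  have "bij_betw (g \<circ> f) V V" using bij_betw_trans[OF autD(1)[OF f] autD(1)[OF g]] .
  moreover have "E u v \<longleftrightarrow> E ((g \<circ> f) u) ((g \<circ> f) v)" if "u \<in> V" "v \<in> V" for u v
  proof -
    have "f u \<in> V" "f v \<in> V" using that aut_V[OF f] by auto
    then show ?thesis using autD(2)[OF f that] autD(2)[OF g] by simp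
  qed
  ultimately show ?thesis unfolding automorphisms_def by blast
qed

lemma aut_inv_f: "f \<in> Aut \<Longrightarrow> x \<in> V \<Longrightarrow> inv_into V f (f x) = x"
  by (rule inv_into_f_f[OF aut_inj])

lemma aut_f_inv: "f \<in> Aut \<Longrightarrow> y \<in> V \<Longrightarrow> f (inv_into V f y) = y"
proof -
  assume f: "f \<in> Aut" and y: "y \<in> V"
  have "f ` V = V" using autD(1)[OF f] by (simp add: bij_betw_def)
  then have "y \<in> f ` V" using y by simp
  then show ?thesis by (rule f_inv_into_f)
qed

lemma aut_inv: "f \<in> Aut \<Longrightarrow> inv_into V f \<in> Aut"
proof -
  assume f: "f \<in> Aut"
  have b: "bij_betw (inv_into V f) V V" using autD(1)[OF f] bij_betw_inv_into by blast
  have "E u v \<longleftrightarrow> E (inv_into V f u) (inv_into V f v)" if "u \<in> V" "v \<in> V" for u v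
  proof -
    have "inv_into V f u \<in> V" "inv_into V f v \<in> V" using b that bij_betwE by blast+
    moreover have "f (inv_into V f u) = u" "f (inv_into V f v) = v"
      using that aut_f_inv[OF f] by auto
    ultimately show ?thesis using autD(2)[OF f] by metis
  qed
  then show ?thesis using b unfolding automorphisms_def by blast
qed

lemma edges_V: "e \<in> edges V E \<Longrightarrow> e \<subseteq> V"
  unfolding edges_def by blast

lemma aut_edge: "f \<in> Aut \<Longrightarrow> e \<in> edges V E \<Longrightarrow> f ` e \<in> edges V E"
proof -
  assume f: "f \<in> Aut" and e: "e \<in> edges V E"
  obtain u v where "e = {u, v}" "E u v" using e by (rule edgesE)
  then show ?thesis using aut_E[OF f] edges_iff by simp
qed

lemma aut_cycle:
  assumes f: "f \<in> Aut" and c: "is_cycle V E cs"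
  shows "is_cycle V E (map f cs)" "cycle_edges (map f cs) = (\<lambda>e. f ` e) ` cycle_edges cs"
proof -
  have c': "3 \<le> length cs" "distinct cs" "set cs \<subseteq> V" "wlk E (cs @ [hd cs])" using c by (auto simp: is_cycle_iff)
  have ne: "cs \<noteq> []" using c'(1) by auto
  have "distinct (map f cs)" using c'(2,3) aut_inj[OF f] by (simp add: distinct_map inj_on_subset)
  moreover have "set (map f cs) \<subseteq> V" using c'(3) aut_V[OF f] by auto
  moreover have "map f cs @ [hd (map f cs)] = map f (cs @ [hd cs])" using ne by (simp add: hd_map)
  moreover have "wlk E (map f (cs @ [hd cs]))" using wlk_map[OF c'(4)] aut_E[OF f] by blast
  ultimately show "is_cycle V E (map f cs)" using c'(1) by (simp add: is_cycle_iff)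
  show "cycle_edges (map f cs) = (\<lambda>e. f ` e) ` cycle_edges cs"
    using ne cycle_edges_eq[of "map f cs"] cycle_edges_eq[of cs] ped_map[of f "cs @ [hd cs]"]
    by (simp add: hd_map)
qed

lemma aut_edge_rel: "f \<in> Aut \<Longrightarrow> edge_rel V E e1 e2 \<Longrightarrow> edge_rel V E (f ` e1) (f ` e2)"
  unfolding edge_rel_def using aut_cycle by blast

lemma inv_img: "f \<in> Aut \<Longrightarrow> e \<subseteq> V \<Longrightarrow> inv_into V f ` f ` e = e"
proof -
  assume a: "f \<in> Aut" "e \<subseteq> V"
  have "inv_into V f ` f ` e = (\<lambda>x. inv_into V f (f x)) ` e" by (simp add: image_image)
  also have "\<dots> = (\<lambda>x. x) ` e" using a aut_inv_f by (intro image_cong) auto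
  finally show ?thesis by simp
qed

lemma img_inv: "f \<in> Aut \<Longrightarrow> e \<subseteq> V \<Longrightarrow> f ` inv_into V f ` e = e"
proof -
  assume a: "f \<in> Aut" "e \<subseteq> V"
  have "f ` inv_into V f ` e = (\<lambda>x. f (inv_into V f x)) ` e" by (simp add: image_image)
  also have "\<dots> = (\<lambda>x. x) ` e" using a aut_f_inv by (intro image_cong) auto
  finally show ?thesis by simp
qed

lemma aut_cls: "f \<in> Aut \<Longrightarrow> e \<in> edges V E \<Longrightarrow> edge_image f (cls e) = cls (f ` e)"
proof -
  assume f: "f \<in> Aut" and e: "e \<in> edges V E"
  let ?g = "inv_into V f"
  have g: "?g \<in> Aut" using aut_inv[OF f] .
  show ?thesis
  proof
    show "edge_image f (cls e) \<subseteq> cls (f ` e)"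
    proof
      fix e'' assume "e'' \<in> edge_image f (cls e)"
      then obtain e' where e': "e' \<in> cls e" "e'' = f ` e'" unfolding edge_image_def by blast
      then have "e' \<in> edges V E" "edge_rel V E e e'" unfolding cls_def by auto
      then show "e'' \<in> cls (f ` e)" unfolding cls_def using aut_edge[OF f] aut_edge_rel[OF f] e'(2) by blast
    qed
  next
    show "cls (f ` e) \<subseteq> edge_image f (cls e)"
    proof
      fix e'' assume "e'' \<in> cls (f ` e)"
      then have e'': "e'' \<in> edges V E" "edge_rel V E (f ` e) e''" unfolding cls_def by auto
      have "edge_rel V E (?g ` f ` e) (?g ` e'')" using aut_edge_rel[OF g e''(2)] .
      then have "edge_rel V E e (?g ` e'')" using inv_img[OF f edges_V[OF e]] by simp
      moreover have "?g ` e'' \<in> edges V E" using aut_edge[OF g e''(1)] .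
      moreover have "e'' = f ` ?g ` e''" using img_inv[OF f edges_V[OF e''(1)]] by simp
      ultimately show "e'' \<in> edge_image f (cls e)" unfolding edge_image_def cls_def by blast
    qed
  qed
qed

lemma aut_lobe: "f \<in> Aut \<Longrightarrow> L \<in> LL \<Longrightarrow> edge_image f L \<in> LL"
proof -
  assume f: "f \<in> Aut" and "L \<in> LL"
  then obtain e where e: "e \<in> edges V E" "L = cls e" unfolding lobes_iff by blast
  then have "edge_image f L = cls (f ` e)" using aut_cls[OF f] by simp
  then show ?thesis using aut_edge[OF f e(1)] unfolding lobes_iff by blast
qed

lemma edge_image_comp: "edge_image (g \<circ> f) L = edge_image g (edge_image f L)"
proof -
  have "edge_image g (edge_image f L) = (\<lambda>e. g ` f ` e) ` L" unfolding edge_image_def by (rule image_image)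
  also have "\<dots> = (\<lambda>e. (g \<circ> f) ` e) ` L" by (metis image_comp)
  finally show ?thesis unfolding edge_image_def by simp
qed

lemma edge_image_inv: "f \<in> Aut \<Longrightarrow> L \<in> LL \<Longrightarrow> edge_image (inv_into V f) (edge_image f L) = L"
proof -
  assume a: "f \<in> Aut" "L \<in> LL"
  have "edge_image (inv_into V f) (edge_image f L) = (\<lambda>e. inv_into V f ` f ` e) ` L"
    unfolding edge_image_def by (rule image_image)
  also have "\<dots> = (\<lambda>e. e) ` L"
  proof (rule image_cong)
    fix e assume "e \<in> L"
    then have "e \<subseteq> V" using lobe_sub[OF a(2)] edges_V by blast
    then show "inv_into V f ` f ` e = e" by (rule inv_img[OF a(1)])
  qed simp
  finally show ?thesis by simp
qed

lemma edge_image_inv2: "f \<in> Aut \<Longrightarrow> L \<in> LL \<Longrightarrow> edge_image f (edge_image (inv_into V f) L) = L"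
proof -
  assume a: "f \<in> Aut" "L \<in> LL"
  have "edge_image f (edge_image (inv_into V f) L) = (\<lambda>e. f ` inv_into V f ` e) ` L"
    unfolding edge_image_def by (rule image_image)
  also have "\<dots> = (\<lambda>e. e) ` L"
  proof (rule image_cong)
    fix e assume "e \<in> L"
    then have "e \<subseteq> V" using lobe_sub[OF a(2)] edges_V by blast
    then show "f ` inv_into V f ` e = e" by (rule img_inv[OF a(1)])
  qed simp
  finally show ?thesis by simp
qed

lemma VL_image: "\<Union>(edge_image f L) = f ` \<Union>L"
  unfolding edge_image_def by (simp add: image_Union)

lemma lobe_VL_V: "L \<in> LL \<Longrightarrow> \<Union>L \<subseteq> V"
  using lobe_sub edges_V by blast

lemma lobe_edge_form: "L \<in> LL \<Longrightarrow> e \<in> L \<Longrightarrow> \<exists>a b. e = {a, b} \<and> a \<noteq> b \<and> a \<in> \<Union>L \<and> b \<in> \<Union>L"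
proof -
  assume L: "L \<in> LL" and e: "e \<in> L"
  then have "e \<in> edges V E" using lobe_sub by blast
  then obtain a b where "e = {a, b}" "E a b" by (rule edgesE)
  then show ?thesis using e E_irr by blast
qed

lemma aut_lobe_iso: "f \<in> Aut \<Longrightarrow> L \<in> LL \<Longrightarrow> lobe_iso L (edge_image f L) f"
proof -
  assume f: "f \<in> Aut" and L: "L \<in> LL"
  have inj: "inj_on f (\<Union>L)" using aut_inj[OF f] lobe_VL_V[OF L] inj_on_subset by blast
  have "bij_betw f (\<Union>L) (\<Union>(edge_image f L))" unfolding bij_betw_def using inj VL_image[of f L] by simp
  moreover have "{x, y} \<in> L \<longleftrightarrow> {f x, f y} \<in> edge_image f L" if "x \<in> \<Union>L" "y \<in> \<Union>L" for x y
  proof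
    assume "{x, y} \<in> L"
    moreover have "{f x, f y} = f ` {x, y}" by simp
    ultimately show "{f x, f y} \<in> edge_image f L" unfolding edge_image_def by blast
  next
    assume "{f x, f y} \<in> edge_image f L"
    then obtain e where e: "e \<in> L" "{f x, f y} = f ` e" unfolding edge_image_def by auto
    then obtain a b where ab: "e = {a, b}" "a \<in> \<Union>L" "b \<in> \<Union>L" using lobe_edge_form[OF L] by blast
    have "{f x, f y} = {f a, f b}" using e ab by simp
    then have "(f x = f a \<and> f y = f b) \<or> (f x = f b \<and> f y = f a)" by (simp add: doubleton_eq_iff)
    then have "(x = a \<and> y = b) \<or> (x = b \<and> y = a)"
      using inj_onD[OF inj] that ab(2,3) by blast
    then have "{x, y} = {a, b}" by auto
    then show "{x, y} \<in> L" using e ab by simp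
  qed
  ultimately show ?thesis unfolding lobe_iso_def by blast
qed

definition ciso :: "'a set set \<Rightarrow> 'a set set \<Rightarrow> ('a \<Rightarrow> 'a) \<Rightarrow> bool" where
  "ciso L M g \<longleftrightarrow> lobe_iso L M g \<and> (\<forall>x\<in>\<Union>L. g x \<in> orbit_of Aut x)"

lemma orbit_iff: "y \<in> orbit_of G x \<longleftrightarrow> (\<exists>f\<in>G. y = f x)"
  unfolding orbit_of_def by blast

lemma orbit_trans: "y \<in> orbit_of Aut x \<Longrightarrow> z \<in> orbit_of Aut y \<Longrightarrow> z \<in> orbit_of Aut x"
proof -
  assume "y \<in> orbit_of Aut x" "z \<in> orbit_of Aut y"
  then obtain f g where "f \<in> Aut" "y = f x" "g \<in> Aut" "z = g y" unfolding orbit_iff by blast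
  then have "g \<circ> f \<in> Aut" "z = (g \<circ> f) x" using aut_comp by auto
  then show ?thesis unfolding orbit_iff by blast
qed

lemma orbit_sym: "x \<in> V \<Longrightarrow> y \<in> orbit_of Aut x \<Longrightarrow> x \<in> orbit_of Aut y"
proof -
  assume "x \<in> V" "y \<in> orbit_of Aut x"
  then obtain f where "f \<in> Aut" "y = f x" unfolding orbit_iff by blast
  then have "inv_into V f \<in> Aut" "x = inv_into V f y" using aut_inv aut_inv_f \<open>x \<in> V\<close> by auto
  then show ?thesis unfolding orbit_iff by blast
qed

lemma orbit_refl: "x \<in> orbit_of Aut x"
  unfolding orbit_iff using aut_id by (metis id_apply)

lemma ciso_comp:
  assumes "ciso L M g" "ciso M N h"
  shows "ciso L N (h \<circ> g)"
proof -
  have bg: "bij_betw g (\<Union>L) (\<Union>M)" and bh: "bij_betw h (\<Union>M) (\<Union>N)"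
    using assms unfolding ciso_def lobe_iso_def by auto
  have "bij_betw (h \<circ> g) (\<Union>L) (\<Union>N)" using bij_betw_trans[OF bg bh] .
  moreover have "{x, y} \<in> L \<longleftrightarrow> {(h \<circ> g) x, (h \<circ> g) y} \<in> N" if "x \<in> \<Union>L" "y \<in> \<Union>L" for x y
  proof -
    have "g x \<in> \<Union>M" "g y \<in> \<Union>M" using bg that bij_betwE by blast+
    then show ?thesis using assms that unfolding ciso_def lobe_iso_def by auto
  qed
  moreover have "(h \<circ> g) x \<in> orbit_of Aut x" if "x \<in> \<Union>L" for x
  proof -
    have "g x \<in> \<Union>M" using bg that bij_betwE by blast
    then show ?thesis using assms that orbit_trans unfolding ciso_def by fastforce
  qed
  ultimately show ?thesis unfolding ciso_def lobe_iso_def by blast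
qed

lemma ciso_inv:
  assumes c: "ciso L M g" and L: "L \<in> LL"
  shows "ciso M L (inv_into (\<Union>L) g)" "\<And>x. x \<in> \<Union>L \<Longrightarrow> inv_into (\<Union>L) g (g x) = x"
proof -
  have bg: "bij_betw g (\<Union>L) (\<Union>M)" using c unfolding ciso_def lobe_iso_def by auto
  let ?i = "inv_into (\<Union>L) g"
  have bi: "bij_betw ?i (\<Union>M) (\<Union>L)" using bij_betw_inv_into[OF bg] .
  have gi: "g (?i y) = y" if "y \<in> \<Union>M" for y using bg that by (auto simp: bij_betw_def f_inv_into_f)
  show ix: "\<And>x. x \<in> \<Union>L \<Longrightarrow> ?i (g x) = x" using bg by (auto simp: bij_betw_def inv_into_f_f)
  have "{x, y} \<in> M \<longleftrightarrow> {?i x, ?i y} \<in> L" if "x \<in> \<Union>M" "y \<in> \<Union>M" for x y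
  proof -
    have "?i x \<in> \<Union>L" "?i y \<in> \<Union>L" using bi that bij_betwE by blast+
    then show ?thesis using c gi that unfolding ciso_def lobe_iso_def by metis
  qed
  moreover have "?i y \<in> orbit_of Aut y" if "y \<in> \<Union>M" for y
  proof -
    have "?i y \<in> \<Union>L" using bi that bij_betwE by blast
    then have "g (?i y) \<in> orbit_of Aut (?i y)" using c unfolding ciso_def by blast
    then show ?thesis using gi[OF that] orbit_sym \<open>?i y \<in> \<Union>L\<close> lobe_VL_V[OF L] by auto
  qed
  ultimately show "ciso M L ?i" using bi unfolding ciso_def lobe_iso_def by blast
qed

lemma ciso_inj: "ciso L M g \<Longrightarrow> x \<in> \<Union>L \<Longrightarrow> y \<in> \<Union>L \<Longrightarrow> g x = g y \<Longrightarrow> x = y"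
  unfolding ciso_def lobe_iso_def bij_betw_def inj_on_def by blast

lemma ciso_img: "ciso L M g \<Longrightarrow> g ` \<Union>L = \<Union>M"
  unfolding ciso_def lobe_iso_def bij_betw_def by blast

lemma ciso_edge: "ciso L M g \<Longrightarrow> x \<in> \<Union>L \<Longrightarrow> y \<in> \<Union>L \<Longrightarrow> {x, y} \<in> L \<longleftrightarrow> {g x, g y} \<in> M"
  unfolding ciso_def lobe_iso_def by blast

lemma aut_ciso: "f \<in> Aut \<Longrightarrow> L \<in> LL \<Longrightarrow> ciso L (edge_image f L) f"
  unfolding ciso_def using aut_lobe_iso unfolding orbit_iff by blast

end

context sgraph begin

lemma match_ex:
  assumes M: "M \<in> LL" "c \<in> \<Union>M" and M': "M' \<in> LL" and h: "ciso M M' h"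
  shows "\<exists>\<beta> \<gamma>. bij_betw \<beta> {N \<in> LL. c \<in> \<Union>N \<and> N \<noteq> M} {N \<in> LL. h c \<in> \<Union>N \<and> N \<noteq> M'} \<and>
     (\<forall>N \<in> {N \<in> LL. c \<in> \<Union>N \<and> N \<noteq> M}. ciso N (\<beta> N) (\<gamma> N) \<and> \<gamma> N c = h c)"
proof -
  define c' where "c' = h c"
  have "c' \<in> orbit_of Aut c" using h M(2) unfolding ciso_def c'_def by blast
  then obtain g where g: "g \<in> Aut" "c' = g c" unfolding orbit_iff by blast
  have cV: "c \<in> V" using M lobe_VL_V by blast
  define gi where "gi = inv_into V g"
  have gi: "gi \<in> Aut" "gi c' = c" using aut_inv[OF g(1)] aut_inv_f[OF g(1) cV] g(2) unfolding gi_def by auto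
  have c'M': "c' \<in> \<Union>M'" using ciso_img[OF h] M(2) unfolding c'_def by blast
  define A where "A = {N \<in> LL. c \<in> \<Union>N}"
  define B where "B = {N \<in> LL. c' \<in> \<Union>N}"
  have eqA: "{N \<in> LL. c \<in> \<Union>N \<and> N \<noteq> M} = A - {M}" unfolding A_def by blast
  have eqB: "{N \<in> LL. h c \<in> \<Union>N \<and> N \<noteq> M'} = B - {M'}" unfolding B_def c'_def by blast
  define N0 where "N0 = edge_image gi M'"
  have N0: "N0 \<in> LL" "c \<in> \<Union>N0" using aut_lobe[OF gi(1) M'] VL_image[of gi M'] c'M' gi(2)
    unfolding N0_def by auto
  have MA: "M \<in> A" "N0 \<in> A" using M N0 unfolding A_def by auto
  have gN0: "edge_image g N0 = M'" unfolding N0_def gi_def using edge_image_inv2[OF g(1) M'] .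
  define sw where "sw N = (if N = N0 then M else if N = M then N0 else N)" for N
  have bsw: "bij_betw sw (A - {M}) (A - {N0})"
    by (rule bij_betw_byWitness[where f'=sw]) (auto simp: sw_def MA)
  have beg: "bij_betw (edge_image g) (A - {N0}) (B - {M'})"
  proof (rule bij_betw_byWitness[where f'="edge_image gi"])
    show "\<forall>a\<in>A - {N0}. edge_image gi (edge_image g a) = a"
    proof
      fix a assume "a \<in> A - {N0}"
      then have "a \<in> LL" unfolding A_def by blast
      then show "edge_image gi (edge_image g a) = a" unfolding gi_def by (rule edge_image_inv[OF g(1)])
    qed
    show "\<forall>a'\<in>B - {M'}. edge_image g (edge_image gi a') = a'"
    proof
      fix a assume "a \<in> B - {M'}"
      then have "a \<in> LL" unfolding B_def by blast
      then show "edge_image g (edge_image gi a) = a" unfolding gi_def by (rule edge_image_inv2[OF g(1)])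
    qed
    show "edge_image g ` (A - {N0}) \<subseteq> B - {M'}"
    proof
      fix N' assume "N' \<in> edge_image g ` (A - {N0})"
      then obtain N where N: "N \<in> A" "N \<noteq> N0" "N' = edge_image g N" by blast
      have NL: "N \<in> LL" "c \<in> \<Union>N" using N(1) unfolding A_def by auto
      have "N' \<in> LL" using aut_lobe[OF g(1) NL(1)] N(3) by simp
      moreover have "c' \<in> \<Union>N'"
      proof -
        have "g c \<in> g ` \<Union>N" using NL(2) by (rule imageI)
        then show ?thesis using N(3) VL_image[of g N] g(2) by simp
      qed
      moreover have "N' \<noteq> M'"
      proof
        assume "N' = M'"
        then have "N = edge_image gi M'" using N(3) edge_image_inv[OF g(1) NL(1)] unfolding gi_def by simp
        then show False using N(2) N0_def by simp
      qed
      ultimately show "N' \<in> B - {M'}" unfolding B_def by blast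
    qed
    show "edge_image gi ` (B - {M'}) \<subseteq> A - {N0}"
    proof
      fix N assume "N \<in> edge_image gi ` (B - {M'})"
      then obtain N' where N': "N' \<in> B" "N' \<noteq> M'" "N = edge_image gi N'" by blast
      have NL: "N' \<in> LL" "c' \<in> \<Union>N'" using N'(1) unfolding B_def by auto
      have "N \<in> LL" using aut_lobe[OF gi(1) NL(1)] N'(3) by simp
      moreover have "c \<in> \<Union>N"
      proof -
        have "gi c' \<in> gi ` \<Union>N'" using NL(2) by (rule imageI)
        then show ?thesis using N'(3) VL_image[of gi N'] gi(2) by simp
      qed
      moreover have "N \<noteq> N0"
      proof
        assume "N = N0"
        then have "N' = edge_image g N0" using N'(3) edge_image_inv2[OF g(1) NL(1)] unfolding gi_def by simp
        then show False using N'(2) gN0 by simp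
      qed
      ultimately show "N \<in> A - {N0}" unfolding A_def by blast
    qed
  qed
  define \<beta> where "\<beta> = edge_image g \<circ> sw"
  have bb: "bij_betw \<beta> (A - {M}) (B - {M'})" unfolding \<beta>_def using bij_betw_trans[OF bsw beg] .
  define hi where "hi = inv_into (\<Union>M) h"
  have hi: "ciso M' M hi" "hi c' = c" using ciso_inv[OF h M(1)] M(2) unfolding hi_def c'_def by auto
  define \<gamma> where "\<gamma> N = (if N = N0 then g \<circ> (hi \<circ> g) else g)" for N
  have "ciso N (\<beta> N) (\<gamma> N) \<and> \<gamma> N c = h c" if N: "N \<in> A - {M}" for N
  proof (cases "N = N0")
    case True
    then have NM: "N0 \<noteq> M" using N by blast
    have "\<beta> N = edge_image g M" using True NM unfolding \<beta>_def sw_def by simp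
    moreover have "ciso N0 M' g" using aut_ciso[OF g(1) N0(1)] gN0 by simp
    then have "ciso N0 M (hi \<circ> g)" using ciso_comp hi(1) by blast
    then have "ciso N0 (edge_image g M) (g \<circ> (hi \<circ> g))" using ciso_comp aut_ciso[OF g(1) M(1)] by blast
    moreover have "(g \<circ> (hi \<circ> g)) c = h c" using g(2) hi(2) c'_def by simp
    ultimately show ?thesis using True unfolding \<gamma>_def by simp
  next
    case False
    then have "sw N = N" using N unfolding sw_def by auto
    then have "\<beta> N = edge_image g N" unfolding \<beta>_def by simp
    moreover have "N \<in> LL" using N unfolding A_def by blast
    ultimately show ?thesis using aut_ciso[OF g(1)] False g(2) c'_def unfolding \<gamma>_def by simp
  qed
  then show ?thesis using bb eqA eqB by metis
qed

end

locale two_rooted = cgraph +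
  fixes L0 L :: "'a set set" and \<sigma>0 :: "'a \<Rightarrow> 'a"
  assumes L0: "L0 \<in> lobes V E" and L: "L \<in> lobes V E" and s0: "ciso L0 L \<sigma>0"
begin

sublocale A: rooted V E L0 by unfold_locales (rule L0)
sublocale B: rooted V E L by unfold_locales (rule L)

definition MATCH :: "'a \<Rightarrow> 'a set set \<Rightarrow> 'a set set \<Rightarrow> ('a \<Rightarrow> 'a) \<Rightarrow> ('a set set \<Rightarrow> 'a set set) \<times> ('a set set \<Rightarrow> 'a \<Rightarrow> 'a)" where
  "MATCH c M M' h = (SOME p. bij_betw (fst p) {N \<in> LL. c \<in> \<Union>N \<and> N \<noteq> M} {N \<in> LL. h c \<in> \<Union>N \<and> N \<noteq> M'} \<and>
     (\<forall>N \<in> {N \<in> LL. c \<in> \<Union>N \<and> N \<noteq> M}. ciso N (fst p N) (snd p N) \<and> snd p N c = h c))"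

lemma MATCH_spec:
  assumes "M \<in> LL" "c \<in> \<Union>M" "M' \<in> LL" "ciso M M' h"
  shows "bij_betw (fst (MATCH c M M' h)) {N \<in> LL. c \<in> \<Union>N \<and> N \<noteq> M} {N \<in> LL. h c \<in> \<Union>N \<and> N \<noteq> M'} \<and>
     (\<forall>N \<in> {N \<in> LL. c \<in> \<Union>N \<and> N \<noteq> M}. ciso N (fst (MATCH c M M' h) N) (snd (MATCH c M M' h) N) \<and>
        snd (MATCH c M M' h) N c = h c)"
proof -
  obtain \<beta> \<gamma> where bg: "bij_betw \<beta> {N \<in> LL. c \<in> \<Union>N \<and> N \<noteq> M} {N \<in> LL. h c \<in> \<Union>N \<and> N \<noteq> M'} \<and>
     (\<forall>N \<in> {N \<in> LL. c \<in> \<Union>N \<and> N \<noteq> M}. ciso N (\<beta> N) (\<gamma> N) \<and> \<gamma> N c = h c)"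
    using match_ex[OF assms] by blast
  show ?thesis unfolding MATCH_def
    by (rule someI[where x="(\<beta>, \<gamma>)"]) (use bg in simp)
qed

definition Hs :: "('a set set \<Rightarrow> 'a set set \<times> ('a \<Rightarrow> 'a)) \<Rightarrow> 'a set set \<Rightarrow> 'a set set \<times> ('a \<Rightarrow> 'a)" where
  "Hs G N = (if N = L0 then (L, \<sigma>0) else
     (fst (MATCH (A.par N) (A.pl N) (fst (G (A.pl N))) (snd (G (A.pl N)))) N,
      snd (MATCH (A.par N) (A.pl N) (fst (G (A.pl N))) (snd (G (A.pl N)))) N))"

definition rel :: "('a set set \<times> 'a set set) set" where
  "rel = inv_image less_than A.rk"

definition Fc :: "'a set set \<Rightarrow> 'a set set \<times> ('a \<Rightarrow> 'a)" where
  "Fc = wfrec rel Hs"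

definition psi where "psi N = fst (Fc N)"
definition io where "io N = snd (Fc N)"

definition PM where "PM N = MATCH (A.par N) (A.pl N) (psi (A.pl N)) (io (A.pl N))"

lemma wf_rel: "wf rel"
  unfolding rel_def by (rule wf_inv_image) (rule wf_less_than)

lemma Fc_unfold: "Fc N = Hs (cut Fc rel N) N"
  unfolding Fc_def by (rule wfrec[OF wf_rel])

lemma Fc_L0: "psi L0 = L" "io L0 = \<sigma>0"
  unfolding psi_def io_def using Fc_unfold[of L0] by (simp_all add: Hs_def)

lemma Fc_step: "N \<in> LL \<Longrightarrow> N \<noteq> L0 \<Longrightarrow> psi N = fst (PM N) N \<and> io N = snd (PM N) N"
proof -
  assume N: "N \<in> LL" "N \<noteq> L0"
  have "(A.pl N, N) \<in> rel" unfolding rel_def using A.rk_pl[OF N] by simp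
  then have "cut Fc rel N (A.pl N) = Fc (A.pl N)" by (rule cut_apply)
  then show ?thesis unfolding psi_def io_def PM_def using Fc_unfold[of N] N(2)
    by (simp add: Hs_def)
qed

lemma inv_all:
  "N \<in> LL \<Longrightarrow> psi N \<in> LL \<and> ciso N (psi N) (io N) \<and> (N = L0 \<longrightarrow> psi N = L \<and> io N = \<sigma>0) \<and>
     (N \<noteq> L0 \<longrightarrow> psi N \<noteq> L \<and> B.par (psi N) = io (A.pl N) (A.par N) \<and> B.pl (psi N) = psi (A.pl N) \<and>
        io N (A.par N) = io (A.pl N) (A.par N))"
proof (induction "A.rk N" arbitrary: N rule: less_induct)
  case less
  show ?case
  proof (cases "N = L0")
    case True then show ?thesis using Fc_L0 L s0 by simp
  next
    case False
    note N = less.prems False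
    define M where "M = A.pl N"
    define c where "c = A.par N"
    have M: "M \<in> LL" "c \<in> \<Union>M" "M \<noteq> N" "M \<noteq> L0 \<Longrightarrow> A.par M \<noteq> c"
      using A.pl_props[OF N] unfolding M_def c_def by auto
    have cN: "c \<in> \<Union>N" using A.par_props[OF N] unfolding c_def by blast
    have IH: "psi M \<in> LL \<and> ciso M (psi M) (io M) \<and> (M = L0 \<longrightarrow> psi M = L \<and> io M = \<sigma>0) \<and>
     (M \<noteq> L0 \<longrightarrow> psi M \<noteq> L \<and> B.par (psi M) = io (A.pl M) (A.par M) \<and> B.pl (psi M) = psi (A.pl M) \<and>
        io M (A.par M) = io (A.pl M) (A.par M))"
      using less.hyps[OF A.rk_pl[OF N]] M(1) unfolding M_def by blast
    have sp: "bij_betw (fst (PM N)) {N' \<in> LL. c \<in> \<Union>N' \<and> N' \<noteq> M} {N' \<in> LL. io M c \<in> \<Union>N' \<and> N' \<noteq> psi M} \<and>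
     (\<forall>N' \<in> {N' \<in> LL. c \<in> \<Union>N' \<and> N' \<noteq> M}. ciso N' (fst (PM N) N') (snd (PM N) N') \<and>
        snd (PM N) N' c = io M c)"
      unfolding PM_def c_def[symmetric] M_def[symmetric] using MATCH_spec[OF M(1) M(2)] IH by blast
    have Ndom: "N \<in> {N' \<in> LL. c \<in> \<Union>N' \<and> N' \<noteq> M}" using N cN M(3) by blast
    have st: "psi N = fst (PM N) N" "io N = snd (PM N) N" using Fc_step[OF N] by auto
    have psiN: "psi N \<in> LL" "io M c \<in> \<Union>(psi N)" "psi N \<noteq> psi M"
      using bij_betwE[OF conjunct1[OF sp]] Ndom st(1) by auto
    have ci: "ciso N (psi N) (io N)" "io N c = io M c" using sp Ndom st by auto
    have c'M: "io M c \<in> \<Union>(psi M)" using ciso_img IH M(2) by blast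
    have cond: "psi M = L \<or> B.par (psi M) \<noteq> io M c"
    proof (cases "M = L0")
      case True then show ?thesis using IH by simp
    next
      case MF: False
      have pM: "A.par M \<in> \<Union>M" using A.par_props(1)[OF M(1) MF] .
      have "B.par (psi M) = io M (A.par M)" using IH MF by simp
      moreover have "io M (A.par M) \<noteq> io M c"
        using ciso_inj[of M "psi M" "io M" "A.par M" c] IH pM M(2) M(4)[OF MF] by blast
      ultimately show ?thesis by simp
    qed
    have lp: "psi N \<noteq> L" "B.par (psi N) = io M c" "B.pl (psi N) = psi M"
      using B.local_parent[OF psiN(1) _ psiN(3) psiN(2) c'M cond] IH by auto
    show ?thesis using lp ci psiN(1) False unfolding M_def c_def by simp
  qed
qed

end

context two_rooted begin

lemma inv_basic: "N \<in> LL \<Longrightarrow> psi N \<in> LL \<and> ciso N (psi N) (io N)"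
  using inv_all by blast

lemma inv_nonroot: "N \<in> LL \<Longrightarrow> N \<noteq> L0 \<Longrightarrow> psi N \<noteq> L \<and> B.par (psi N) = io N (A.par N) \<and>
   B.pl (psi N) = psi (A.pl N) \<and> io N (A.par N) = io (A.pl N) (A.par N)"
  using inv_all by metis

lemma PM_spec:
  assumes N: "N \<in> LL" "N \<noteq> L0"
  shows "bij_betw (fst (PM N)) {N' \<in> LL. A.par N \<in> \<Union>N' \<and> N' \<noteq> A.pl N}
           {N' \<in> LL. io (A.pl N) (A.par N) \<in> \<Union>N' \<and> N' \<noteq> psi (A.pl N)}"
proof -
  have M: "A.pl N \<in> LL" "A.par N \<in> \<Union>(A.pl N)" using A.pl_props[OF N] by auto
  show ?thesis unfolding PM_def using MATCH_spec[OF M] inv_basic[OF M(1)] by blast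
qed

definition phi where "phi x = (if x \<in> \<Union>L0 then \<sigma>0 x else io (A.own x) x)"

lemma phi_agree: "N \<in> LL \<Longrightarrow> x \<in> \<Union>N \<Longrightarrow> phi x = io N x"
proof (induction "A.rk N" arbitrary: N rule: less_induct)
  case less
  show ?case
  proof (cases "N = L0")
    case True then show ?thesis using less.prems Fc_L0 unfolding phi_def by simp
  next
    case False
    note N = less.prems(1) False
    show ?thesis
    proof (cases "x = A.par N")
      case True
      have "x \<in> \<Union>(A.pl N)" "A.pl N \<in> LL" using A.pl_props[OF N] True by auto
      then have "phi x = io (A.pl N) x" using less.hyps[OF A.rk_pl[OF N]] by blast
      then show ?thesis using inv_nonroot[OF N] True by simp
    next
      case xF: False
      then have "x \<notin> \<Union>L0 \<and> A.own x = N" using A.own_char[OF N less.prems(2)] by blast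
      then show ?thesis unfolding phi_def by simp
    qed
  qed
qed

lemma psi_inj: "N1 \<in> LL \<Longrightarrow> N2 \<in> LL \<Longrightarrow> psi N1 = psi N2 \<Longrightarrow> N1 = N2"
proof (induction "A.rk N1" arbitrary: N1 N2 rule: less_induct)
  case less
  note N1 = less.prems(1) and N2 = less.prems(2) and eq = less.prems(3)
  show ?case
  proof (cases "N1 = L0 \<or> N2 = L0")
    case True
    then show ?thesis using inv_nonroot Fc_L0 N1 N2 eq by metis
  next
    case False
    then have n1: "N1 \<noteq> L0" and n2: "N2 \<noteq> L0" by auto
    note i1 = inv_nonroot[OF N1 n1] and i2 = inv_nonroot[OF N2 n2]
    have "psi (A.pl N1) = psi (A.pl N2)" using i1 i2 eq by metis
    then have pl: "A.pl N1 = A.pl N2"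
      using less.hyps[OF A.rk_pl[OF N1 n1] A.pl_props(1)[OF N1 n1] A.pl_props(1)[OF N2 n2]] by blast
    define M where "M = A.pl N1"
    have pM: "A.par N1 \<in> \<Union>M" "A.par N2 \<in> \<Union>M" using A.pl_props(2)[OF N1 n1] A.pl_props(2)[OF N2 n2] pl
      unfolding M_def by auto
    have "io M (A.par N1) = io M (A.par N2)" using i1 i2 eq pl unfolding M_def by metis
    then have par: "A.par N1 = A.par N2"
      using ciso_inj[of M "psi M" "io M"] inv_basic[OF A.pl_props(1)[OF N1 n1]] pM unfolding M_def by blast
    have PMe: "PM N1 = PM N2" unfolding PM_def using pl par by simp
    have dom: "N1 \<in> {N' \<in> LL. A.par N1 \<in> \<Union>N' \<and> N' \<noteq> A.pl N1}" "N2 \<in> {N' \<in> LL. A.par N1 \<in> \<Union>N' \<and> N' \<noteq> A.pl N1}"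
      using A.par_props(1)[OF N1 n1] A.par_props(1)[OF N2 n2] A.pl_props(3)[OF N1 n1] A.pl_props(3)[OF N2 n2]
        N1 N2 pl par by auto
    have "fst (PM N1) N1 = fst (PM N1) N2" using Fc_step[OF N1 n1] Fc_step[OF N2 n2] eq PMe by simp
    then show ?thesis using bij_betw_imp_inj_on[OF PM_spec[OF N1 n1]] dom unfolding inj_on_def by blast
  qed
qed

lemma psi_surj: "N' \<in> LL \<Longrightarrow> \<exists>N\<in>LL. psi N = N'"
proof (induction "B.rk N'" arbitrary: N' rule: less_induct)
  case less
  note N' = less.prems
  show ?case
  proof (cases "N' = L")
    case True then show ?thesis using Fc_L0 L0 by blast
  next
    case False
    define M' where "M' = B.pl N'"
    define c' where "c' = B.par N'"
    have M': "M' \<in> LL" "c' \<in> \<Union>M'" "M' \<noteq> N'" "M' \<noteq> L \<Longrightarrow> B.par M' \<noteq> c'"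
      using B.pl_props[OF N' False] unfolding M'_def c'_def by auto
    have c'N: "c' \<in> \<Union>N'" using B.par_props(1)[OF N' False] unfolding c'_def .
    obtain M where M: "M \<in> LL" "psi M = M'"
      using less.hyps[OF B.rk_pl[OF N' False]] M'(1) unfolding M'_def by blast
    have ciM: "ciso M M' (io M)" using inv_basic[OF M(1)] M(2) by simp
    then have "c' \<in> io M ` \<Union>M" using ciso_img M'(2) by blast
    then obtain c where c: "c \<in> \<Union>M" "c' = io M c" by blast
    have cond: "M = L0 \<or> A.par M \<noteq> c"
    proof (cases "M = L0")
      case MF: False
      then have "psi M \<noteq> L" "B.par (psi M) = io M (A.par M)" using inv_nonroot[OF M(1)] by auto
      then have "io M (A.par M) \<noteq> io M c" using M'(4) M(2) c(2) by auto
      then show ?thesis by auto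
    qed simp
    have bij: "bij_betw (fst (MATCH c M (psi M) (io M))) {N \<in> LL. c \<in> \<Union>N \<and> N \<noteq> M}
      {N \<in> LL. io M c \<in> \<Union>N \<and> N \<noteq> psi M}"
      using MATCH_spec[OF M(1) c(1)] inv_basic[OF M(1)] by blast
    have "N' \<in> {N \<in> LL. io M c \<in> \<Union>N \<and> N \<noteq> psi M}" using N' c'N c(2) M(2) M'(3) by auto
    then obtain N where N: "N \<in> {N \<in> LL. c \<in> \<Union>N \<and> N \<noteq> M}" "fst (MATCH c M (psi M) (io M)) N = N'"
      using bij unfolding bij_betw_def by (metis (no_types, lifting) imageE)
    have NL: "N \<in> LL" "N \<noteq> M" "c \<in> \<Union>N" using N(1) by auto
    have lp: "N \<noteq> L0" "A.par N = c" "A.pl N = M" using A.local_parent[OF NL(1) M(1) NL(2) NL(3) c(1) cond] by auto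
    have "psi N = fst (PM N) N" using Fc_step[OF NL(1) lp(1)] by simp
    also have "\<dots> = N'" unfolding PM_def lp using N(2) by simp
    finally show ?thesis using NL(1) by blast
  qed
qed

end

context two_rooted begin

definition cl where "cl x = (if x \<in> \<Union>L0 then L0 else A.own x)"

lemma cl_props: "x \<in> V \<Longrightarrow> cl x \<in> LL \<and> x \<in> \<Union>(cl x) \<and> (cl x \<noteq> L0 \<longrightarrow> A.par (cl x) \<noteq> x \<and> x \<notin> \<Union>L0)"
  unfolding cl_def using A.own_props L0 by auto

lemma phi_cl: "x \<in> V \<Longrightarrow> phi x = io (cl x) x"
  using phi_agree cl_props by blast

lemma phi_out:
  assumes x: "x \<in> V" "cl x \<noteq> L0"
  shows "phi x \<notin> \<Union>L \<and> B.own (phi x) = psi (cl x)"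
proof -
  define N where "N = cl x"
  have N: "N \<in> LL" "x \<in> \<Union>N" "A.par N \<noteq> x" "N \<noteq> L0" using cl_props[OF x(1)] x(2) unfolding N_def by auto
  have ci: "psi N \<in> LL" "ciso N (psi N) (io N)" using inv_basic[OF N(1)] by auto
  have nr: "psi N \<noteq> L" "B.par (psi N) = io N (A.par N)" using inv_nonroot[OF N(1) N(4)] by auto
  have y: "io N x \<in> \<Union>(psi N)" using ciso_img[OF ci(2)] N(2) by blast
  have pN: "A.par N \<in> \<Union>N" using A.par_props(1)[OF N(1) N(4)] .
  have "io N x \<noteq> B.par (psi N)" using nr(2) ciso_inj[OF ci(2) N(2) pN] N(3) by auto
  then have "io N x \<notin> \<Union>L \<and> B.own (io N x) = psi N" using B.own_char[OF ci(1) nr(1) y] by blast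
  then show ?thesis using phi_cl[OF x(1)] unfolding N_def by simp
qed

lemma LL_ne: "LL \<noteq> {}" using L0 by blast

lemma phi_V: "x \<in> V \<Longrightarrow> phi x \<in> V"
proof -
  assume x: "x \<in> V"
  obtain N where N: "N \<in> LL" "x \<in> \<Union>N" using vertex_in_lobe[OF LL_ne x] by blast
  have "phi x = io N x" using phi_agree N by blast
  moreover have "io N x \<in> \<Union>(psi N)" using ciso_img inv_basic[OF N(1)] N(2) by blast
  ultimately show "phi x \<in> V" using lobe_VL_V inv_basic[OF N(1)] by auto
qed

lemma phi_inj: "x1 \<in> V \<Longrightarrow> x2 \<in> V \<Longrightarrow> phi x1 = phi x2 \<Longrightarrow> x1 = x2"
proof -
  assume x: "x1 \<in> V" "x2 \<in> V" "phi x1 = phi x2"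
  have inL: "phi x \<in> \<Union>L" if "x \<in> V" "cl x = L0" for x
  proof -
    have "x \<in> \<Union>L0" using cl_props[OF that(1)] that(2) by simp
    then have "\<sigma>0 x \<in> \<Union>L" using ciso_img[OF s0] by blast
    then show ?thesis using phi_cl[OF that(1)] that(2) Fc_L0 by simp
  qed
  consider "cl x1 = L0" "cl x2 = L0" | "cl x1 = L0" "cl x2 \<noteq> L0" | "cl x1 \<noteq> L0" "cl x2 = L0"
    | "cl x1 \<noteq> L0" "cl x2 \<noteq> L0" by blast
  then show "x1 = x2"
  proof cases
    case 1
    then have "\<sigma>0 x1 = \<sigma>0 x2" "x1 \<in> \<Union>L0" "x2 \<in> \<Union>L0"
      using x phi_cl cl_props Fc_L0 by (metis)+
    then show ?thesis using ciso_inj[OF s0] by blast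
  next
    case 2 then show ?thesis using inL[OF x(1)] phi_out[OF x(2)] x(3) by simp
  next
    case 3 then show ?thesis using inL[OF x(2)] phi_out[OF x(1)] x(3) by simp
  next
    case 4
    then have "psi (cl x1) = psi (cl x2)" using phi_out x by metis
    then have "cl x1 = cl x2" using psi_inj cl_props x by blast
    moreover have "io (cl x1) x1 = io (cl x2) x2" using phi_cl x by metis
    ultimately show ?thesis using ciso_inj inv_basic cl_props x by metis
  qed
qed

lemma phi_surj: "y \<in> V \<Longrightarrow> \<exists>x\<in>V. phi x = y"
proof -
  assume y: "y \<in> V"
  obtain N' where N': "N' \<in> LL" "y \<in> \<Union>N'" using vertex_in_lobe[OF LL_ne y] by blast
  obtain N where N: "N \<in> LL" "psi N = N'" using psi_surj[OF N'(1)] by blast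
  have "y \<in> io N ` \<Union>N" using ciso_img inv_basic[OF N(1)] N(2) N'(2) by blast
  then obtain x where "x \<in> \<Union>N" "y = io N x" by blast
  then show ?thesis using phi_agree[OF N(1)] lobe_VL_V[OF N(1)] by blast
qed

lemma phi_E: "u \<in> V \<Longrightarrow> v \<in> V \<Longrightarrow> E u v \<longleftrightarrow> E (phi u) (phi v)"
proof
  assume uv: "u \<in> V" "v \<in> V" "E u v"
  define N where "N = cls {u, v}"
  have N: "N \<in> LL" "{u, v} \<in> N" using uv(3) edge_lobe cls_self edges_iff unfolding N_def by blast+
  have inN: "u \<in> \<Union>N" "v \<in> \<Union>N" using N(2) by blast+
  have "{io N u, io N v} \<in> psi N" using ciso_edge[OF conjunct2[OF inv_basic[OF N(1)]] inN] N(2) by blast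
  then have "E (io N u) (io N v)" using lobe_sub inv_basic[OF N(1)] edges_iff by blast
  then show "E (phi u) (phi v)" using phi_agree[OF N(1)] inN by simp
next
  assume uv: "u \<in> V" "v \<in> V" and e: "E (phi u) (phi v)"
  define N' where "N' = cls {phi u, phi v}"
  have N': "N' \<in> LL" "{phi u, phi v} \<in> N'" using e edge_lobe cls_self edges_iff unfolding N'_def by blast+
  obtain N where N: "N \<in> LL" "psi N = N'" using psi_surj[OF N'(1)] by blast
  have ci: "ciso N N' (io N)" using inv_basic[OF N(1)] N(2) by simp
  have "phi u \<in> io N ` \<Union>N" "phi v \<in> io N ` \<Union>N" using ciso_img[OF ci] N'(2) by blast+
  then obtain a b where ab: "a \<in> \<Union>N" "phi u = io N a" "b \<in> \<Union>N" "phi v = io N b" by blast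
  have "phi a = io N a" "phi b = io N b" using phi_agree[OF N(1)] ab by auto
  moreover have "a \<in> V" "b \<in> V" using ab lobe_VL_V[OF N(1)] by auto
  ultimately have "a = u" "b = v" using phi_inj uv ab by metis+
  then have "{io N u, io N v} \<in> N'" using N'(2) ab by simp
  then have "{u, v} \<in> N" using ciso_edge[OF ci] ab \<open>a = u\<close> \<open>b = v\<close> by blast
  then show "E u v" using lobe_sub[OF N(1)] edges_iff by blast
qed

lemma phi_aut: "phi \<in> Aut"
proof -
  have "inj_on phi V" using phi_inj unfolding inj_on_def by blast
  moreover have "phi ` V = V" using phi_V phi_surj by blast
  ultimately show ?thesis unfolding automorphisms_def bij_betw_def using phi_E by blast
qed

lemma phi_L0: "edge_image phi L0 = L"
proof -
  have agree: "phi x = \<sigma>0 x" if "x \<in> \<Union>L0" for x using that unfolding phi_def by simp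
  show ?thesis
  proof
    show "edge_image phi L0 \<subseteq> L"
    proof
      fix e' assume "e' \<in> edge_image phi L0"
      then obtain e where e: "e \<in> L0" "e' = phi ` e" unfolding edge_image_def by blast
      obtain a b where ab: "e = {a, b}" "a \<in> \<Union>L0" "b \<in> \<Union>L0" using lobe_edge_form[OF L0 e(1)] by blast
      have "{\<sigma>0 a, \<sigma>0 b} \<in> L" using ciso_edge[OF s0 ab(2,3)] e(1) ab(1) by blast
      then show "e' \<in> L" using e(2) ab agree by simp
    qed
  next
    show "L \<subseteq> edge_image phi L0"
    proof
      fix e' assume e': "e' \<in> L"
      obtain a' b' where ab: "e' = {a', b'}" "a' \<in> \<Union>L" "b' \<in> \<Union>L" using lobe_edge_form[OF L e'] by blast
      have "a' \<in> \<sigma>0 ` \<Union>L0" "b' \<in> \<sigma>0 ` \<Union>L0" using ciso_img[OF s0] ab by auto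
      then obtain a b where a: "a \<in> \<Union>L0" "a' = \<sigma>0 a" and b: "b \<in> \<Union>L0" "b' = \<sigma>0 b" by blast
      have "{a, b} \<in> L0" using ciso_edge[OF s0 a(1) b(1)] e' ab(1) a(2) b(2) by blast
      moreover have "e' = phi ` {a, b}" using ab(1) a b agree by simp
      ultimately show "e' \<in> edge_image phi L0" unfolding edge_image_def by blast
    qed
  qed
qed

lemma exists_aut: "\<exists>f\<in>Aut. edge_image f L0 = L"
  using phi_aut phi_L0 by blast

end

lemma ecount_bij: "bij_betw f A B \<Longrightarrow> ecount A = ecount B"
  unfolding ecount_def using bij_betw_finite bij_betw_same_card by metis

lemma ecount_pos: "ecount A > 0 \<longleftrightarrow> A \<noteq> {}"
  unfolding ecount_def by (auto simp: card_gt_0_iff zero_enat_def[symmetric]) (simp add: zero_enat_def)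

context cgraph begin

abbreviation S0 where "S0 L0 \<equiv> lobe_stabilizer V E L0"

lemma S_iff: "s \<in> S0 L0 \<longleftrightarrow> s \<in> Aut \<and> edge_image s L0 = L0"
  unfolding lobe_stabilizer_def by blast

lemma S_comp: "s \<in> S0 L0 \<Longrightarrow> t \<in> S0 L0 \<Longrightarrow> s \<circ> t \<in> S0 L0"
  unfolding S_iff using aut_comp edge_image_comp by metis

lemma S_orbit_closed: "q \<in> orbit_of (S0 L0) w \<Longrightarrow> s \<in> S0 L0 \<Longrightarrow> s q \<in> orbit_of (S0 L0) w"
proof -
  assume "q \<in> orbit_of (S0 L0) w" "s \<in> S0 L0"
  then obtain t where "t \<in> S0 L0" "q = t w" unfolding orbit_iff by blast
  then have "s \<circ> t \<in> S0 L0" "s q = (s \<circ> t) w" using S_comp \<open>s \<in> S0 L0\<close> by auto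
  then show ?thesis unfolding orbit_iff by blast
qed

lemma fwd:
  assumes L0: "L0 \<in> LL" and lt: "lobe_transitive V E"
  shows "\<exists>\<sigma> :: 'a set set \<Rightarrow> 'a \<Rightarrow> 'a.
       (\<forall>L \<in> lobes V E. lobe_iso L0 L (\<sigma> L)) \<and>
       (\<forall>Q \<in> {orbit_of (lobe_stabilizer V E L0) w | w. w \<in> V \<and>
                  orbit_of (lobe_stabilizer V E L0) w \<subseteq> \<Union>L0}.
          let \<tau> = (\<lambda>v. ecount {L \<in> lobes V E. v \<in> \<sigma> L ` Q});
              PQ = \<Union>{orbit_of (automorphisms V E) q | q. q \<in> Q}
          in (\<forall>P \<in> {orbit_of (automorphisms V E) u | u. u \<in> V}. \<forall>u\<in>P. \<forall>w\<in>P. \<tau> u = \<tau> w) \<and>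
             (\<forall>v \<in> V. \<tau> v > 0 \<longleftrightarrow> v \<in> PQ))"
proof -
  define \<sigma> where "\<sigma> L = (SOME f. f \<in> Aut \<and> edge_image f L0 = L)" for L
  have sig: "\<sigma> L \<in> Aut \<and> edge_image (\<sigma> L) L0 = L" if "L \<in> LL" for L
  proof -
    have "\<exists>f. f \<in> Aut \<and> edge_image f L0 = L" using lt L0 that unfolding lobe_transitive_def by blast
    then show ?thesis unfolding \<sigma>_def by (rule someI_ex)
  qed
  have part1: "\<forall>L \<in> LL. lobe_iso L0 L (\<sigma> L)" using sig aut_lobe_iso L0 by metis
  have part2: "let \<tau> = (\<lambda>v. ecount {L \<in> LL. v \<in> \<sigma> L ` Q});
              PQ = \<Union>{orbit_of Aut q | q. q \<in> Q}
          in (\<forall>P \<in> {orbit_of Aut u | u. u \<in> V}. \<forall>u\<in>P. \<forall>w\<in>P. \<tau> u = \<tau> w) \<and>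
             (\<forall>v \<in> V. \<tau> v > 0 \<longleftrightarrow> v \<in> PQ)"
    if Qm: "Q \<in> {orbit_of (S0 L0) w | w. w \<in> V \<and> orbit_of (S0 L0) w \<subseteq> \<Union>L0}" for Q
  proof -
    obtain w where w: "Q = orbit_of (S0 L0) w" "w \<in> V" "Q \<subseteq> \<Union>L0" using Qm by blast
    have QV: "Q \<subseteq> V" using w(3) lobe_VL_V[OF L0] by blast
    have K: "g u \<in> \<sigma> (edge_image g M) ` Q" if g: "g \<in> Aut" and M: "M \<in> LL" and u: "u \<in> \<sigma> M ` Q" for g M u
    proof -
      obtain q where q: "q \<in> Q" "u = \<sigma> M q" using u by blast
      define M2 where "M2 = edge_image g M"
      have M2: "M2 \<in> LL" using aut_lobe[OF g M] unfolding M2_def .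
      define f2i where "f2i = inv_into V (\<sigma> M2)"
      define h where "h = f2i \<circ> (g \<circ> \<sigma> M)"
      have hA: "h \<in> Aut" unfolding h_def f2i_def using aut_comp aut_inv sig[OF M] sig[OF M2] g by metis
      have "edge_image h L0 = edge_image f2i (edge_image g (edge_image (\<sigma> M) L0))"
        unfolding h_def using edge_image_comp by metis
      also have "\<dots> = edge_image f2i M2" using sig[OF M] unfolding M2_def by simp
      also have "\<dots> = L0" unfolding f2i_def using edge_image_inv[OF conjunct1[OF sig[OF M2]] L0] sig[OF M2] by simp
      finally have "h \<in> S0 L0" using hA unfolding S_iff by blast
      then have hq: "h q \<in> Q" using S_orbit_closed q(1) w(1) by blast
      have "g u \<in> V" using q QV aut_V sig[OF M] g by blast
      then have "\<sigma> M2 (h q) = g u" unfolding h_def f2i_def using aut_f_inv sig[OF M2] q(2) by simp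
      then show ?thesis using hq unfolding M2_def by (metis imageI)
    qed
    define A where "A u = {M \<in> LL. u \<in> \<sigma> M ` Q}" for u
    have inv: "ecount (A (g u)) = ecount (A u)" if g: "g \<in> Aut" and u: "u \<in> V" for g u
    proof -
      define gi where "gi = inv_into V g"
      have gi: "gi \<in> Aut" "gi (g u) = u" using aut_inv[OF g] aut_inv_f[OF g u] unfolding gi_def by auto
      have "bij_betw (edge_image g) (A u) (A (g u))"
      proof (rule bij_betw_byWitness[where f'="edge_image gi"])
        show "\<forall>a\<in>A u. edge_image gi (edge_image g a) = a"
          unfolding A_def gi_def using edge_image_inv[OF g] by blast
        show "\<forall>a'\<in>A (g u). edge_image g (edge_image gi a') = a'"
          unfolding A_def gi_def using edge_image_inv2[OF g] by blast
        show "edge_image g ` A u \<subseteq> A (g u)"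
          unfolding A_def using K[OF g] aut_lobe[OF g] by blast
        show "edge_image gi ` A (g u) \<subseteq> A u"
        proof
          fix M assume "M \<in> edge_image gi ` A (g u)"
          then obtain M' where M': "M' \<in> LL" "g u \<in> \<sigma> M' ` Q" "M = edge_image gi M'" unfolding A_def by blast
          have "gi (g u) \<in> \<sigma> (edge_image gi M') ` Q" using K[OF gi(1) M'(1) M'(2)] .
          then show "M \<in> A u" unfolding A_def using M' gi aut_lobe[OF gi(1) M'(1)] by simp
        qed
      qed
      then show ?thesis using ecount_bij by metis
    qed
    have a: "\<forall>P \<in> {orbit_of Aut u | u. u \<in> V}. \<forall>u\<in>P. \<forall>w\<in>P. ecount (A u) = ecount (A w)"
    proof (intro ballI)
      fix P u w' assume P: "P \<in> {orbit_of Aut u | u. u \<in> V}" and u: "u \<in> P" and w': "w' \<in> P"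
      obtain x where x: "x \<in> V" "P = orbit_of Aut x" using P by blast
      obtain g1 g2 where "g1 \<in> Aut" "u = g1 x" "g2 \<in> Aut" "w' = g2 x" using u w' unfolding x(2) orbit_iff by blast
      then show "ecount (A u) = ecount (A w')" using inv x(1) by metis
    qed
    have b: "\<forall>v \<in> V. ecount (A v) > 0 \<longleftrightarrow> v \<in> \<Union>{orbit_of Aut q | q. q \<in> Q}"
    proof (intro ballI iffI)
      fix v assume "v \<in> V" "ecount (A v) > 0"
      then obtain M where "M \<in> LL" "v \<in> \<sigma> M ` Q" unfolding ecount_pos A_def by blast
      then obtain q where "q \<in> Q" "v = \<sigma> M q" by blast
      then have "v \<in> orbit_of Aut q" unfolding orbit_iff using sig \<open>M \<in> LL\<close> by blast
      then show "v \<in> \<Union>{orbit_of Aut q | q. q \<in> Q}" using \<open>q \<in> Q\<close> by blast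
    next
      fix v assume "v \<in> V" "v \<in> \<Union>{orbit_of Aut q | q. q \<in> Q}"
      then obtain q where q0: "q \<in> Q" "v \<in> orbit_of Aut q" by blast
      then obtain g where "g \<in> Aut" "v = g q" unfolding orbit_iff by blast
      with q0 have q: "q \<in> Q" "g \<in> Aut" "v = g q" by auto
      have s0: "\<sigma> L0 \<in> S0 L0" using sig[OF L0] unfolding S_iff by blast
      define s0i where "s0i = inv_into V (\<sigma> L0)"
      have "s0i \<in> S0 L0" unfolding S_iff s0i_def
        using aut_inv sig[OF L0] edge_image_inv[OF _ L0, of "\<sigma> L0"] by metis
      then have "s0i q \<in> Q" using S_orbit_closed q(1) w(1) by blast
      moreover have "\<sigma> L0 (s0i q) = q" unfolding s0i_def using aut_f_inv sig[OF L0] q(1) QV by blast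
      ultimately have "q \<in> \<sigma> L0 ` Q" by (metis imageI)
      then have "g q \<in> \<sigma> (edge_image g L0) ` Q" using K[OF q(2) L0] by blast
      then have "edge_image g L0 \<in> A v" unfolding A_def using aut_lobe[OF q(2) L0] q(3) by blast
      then show "ecount (A v) > 0" unfolding ecount_pos by blast
    qed
    show ?thesis unfolding Let_def using a b unfolding A_def by blast
  qed
  show ?thesis using part1 part2 by blast
qed

end

context cgraph begin

lemma bwd:
  assumes L0: "L0 \<in> LL" and H: "\<exists>\<sigma> :: 'a set set \<Rightarrow> 'a \<Rightarrow> 'a.
       (\<forall>L \<in> lobes V E. lobe_iso L0 L (\<sigma> L)) \<and>
       (\<forall>Q \<in> {orbit_of (lobe_stabilizer V E L0) w | w. w \<in> V \<and>
                  orbit_of (lobe_stabilizer V E L0) w \<subseteq> \<Union>L0}.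
          let \<tau> = (\<lambda>v. ecount {L \<in> lobes V E. v \<in> \<sigma> L ` Q});
              PQ = \<Union>{orbit_of (automorphisms V E) q | q. q \<in> Q}
          in (\<forall>P \<in> {orbit_of (automorphisms V E) u | u. u \<in> V}. \<forall>u\<in>P. \<forall>w\<in>P. \<tau> u = \<tau> w) \<and>
             (\<forall>v \<in> V. \<tau> v > 0 \<longleftrightarrow> v \<in> PQ))"
  shows "lobe_transitive V E"
proof -
  obtain \<sigma> :: "'a set set \<Rightarrow> 'a \<Rightarrow> 'a" where s1: "\<forall>L \<in> LL. lobe_iso L0 L (\<sigma> L)" and
    s2': "\<forall>Q \<in> {orbit_of (lobe_stabilizer V E L0) w | w. w \<in> V \<and>
                  orbit_of (lobe_stabilizer V E L0) w \<subseteq> \<Union>L0}.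
          let \<tau> = (\<lambda>v. ecount {L \<in> lobes V E. v \<in> \<sigma> L ` Q});
              PQ = \<Union>{orbit_of (automorphisms V E) q | q. q \<in> Q}
          in (\<forall>P \<in> {orbit_of (automorphisms V E) u | u. u \<in> V}. \<forall>u\<in>P. \<forall>w\<in>P. \<tau> u = \<tau> w) \<and>
             (\<forall>v \<in> V. \<tau> v > 0 \<longleftrightarrow> v \<in> PQ)"
    using H by (elim exE conjE)
  have s2: "\<forall>v \<in> V. ecount {L \<in> LL. v \<in> \<sigma> L ` Q} > 0 \<longleftrightarrow> v \<in> \<Union>{orbit_of Aut q | q. q \<in> Q}"
    if Qm: "Q \<in> {orbit_of (S0 L0) w | w. w \<in> V \<and> orbit_of (S0 L0) w \<subseteq> \<Union>L0}" for Q
  proof -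
    have "let \<tau> = (\<lambda>v. ecount {L \<in> lobes V E. v \<in> \<sigma> L ` Q});
              PQ = \<Union>{orbit_of (automorphisms V E) q | q. q \<in> Q}
          in (\<forall>P \<in> {orbit_of (automorphisms V E) u | u. u \<in> V}. \<forall>u\<in>P. \<forall>w\<in>P. \<tau> u = \<tau> w) \<and>
             (\<forall>v \<in> V. \<tau> v > 0 \<longleftrightarrow> v \<in> PQ)" using s2' Qm by (rule bspec)
    then show ?thesis unfolding Let_def by (rule conjunct2)
  qed
  have ci: "ciso L0 L (\<sigma> L)" if L: "L \<in> LL" for L
  proof -
    have li: "lobe_iso L0 L (\<sigma> L)" using s1 L by blast
    have "\<sigma> L x \<in> orbit_of Aut x" if x: "x \<in> \<Union>L0" for x
    proof -
      define Q where "Q = orbit_of (S0 L0) x"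
      have xV: "x \<in> V" using x lobe_VL_V[OF L0] by blast
      have QL0: "Q \<subseteq> \<Union>L0"
      proof
        fix q assume "q \<in> Q"
        then obtain s where s: "s \<in> S0 L0" "q = s x" unfolding Q_def orbit_iff by blast
        have "s x \<in> s ` \<Union>L0" using x by (rule imageI)
        then show "q \<in> \<Union>L0" using s VL_image[of s L0] unfolding S_iff by simp
      qed
      have Qm: "Q \<in> {orbit_of (S0 L0) w | w. w \<in> V \<and> orbit_of (S0 L0) w \<subseteq> \<Union>L0}"
        using xV QL0 unfolding Q_def by blast
      have idS: "id \<in> S0 L0" unfolding S_iff using aut_id unfolding edge_image_def by simp
      then have xQ: "x \<in> Q" unfolding Q_def orbit_iff by (metis id_apply)
      have vL: "\<sigma> L x \<in> \<Union>L" using li x unfolding lobe_iso_def bij_betw_def by blast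
      then have vV: "\<sigma> L x \<in> V" using lobe_VL_V[OF L] by blast
      have "L \<in> {M \<in> LL. \<sigma> L x \<in> \<sigma> M ` Q}" using L xQ by blast
      then have "ecount {M \<in> LL. \<sigma> L x \<in> \<sigma> M ` Q} > 0" unfolding ecount_pos by blast
      then have "\<sigma> L x \<in> \<Union>{orbit_of Aut q | q. q \<in> Q}" using s2[OF Qm] vV by blast
      then obtain q where q: "q \<in> Q" "\<sigma> L x \<in> orbit_of Aut q" by blast
      obtain s where s: "s \<in> S0 L0" "q = s x" using q(1) unfolding Q_def orbit_iff by blast
      have "q \<in> orbit_of Aut x" using s unfolding S_iff orbit_iff by blast
      then show ?thesis using orbit_trans q(2) by blast
    qed
    then show ?thesis using li unfolding ciso_def by blast
  qed
  have ex: "\<exists>f\<in>Aut. edge_image f L0 = L" if L: "L \<in> LL" for L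
  proof -
    have "two_rooted V E L0 L (\<sigma> L)"
      unfolding two_rooted_def two_rooted_axioms_def using cgraph_axioms L0 L ci[OF L] by blast
    then show ?thesis by (rule two_rooted.exists_aut)
  qed
  show ?thesis unfolding lobe_transitive_def
  proof (intro ballI)
    fix L1 L2 assume L1: "L1 \<in> LL" and L2: "L2 \<in> LL"
    obtain f1 where f1: "f1 \<in> Aut" "edge_image f1 L0 = L1" using ex[OF L1] by blast
    obtain f2 where f2: "f2 \<in> Aut" "edge_image f2 L0 = L2" using ex[OF L2] by blast
    define f where "f = f2 \<circ> inv_into V f1"
    have "f \<in> Aut" unfolding f_def using aut_comp aut_inv f1(1) f2(1) by blast
    moreover have "edge_image f L1 = L2"
    proof -
      have "edge_image f L1 = edge_image f2 (edge_image (inv_into V f1) (edge_image f1 L0))"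
        unfolding f_def using edge_image_comp f1(2) by metis
      also have "\<dots> = edge_image f2 L0" using edge_image_inv[OF f1(1) L0] by simp
      finally show ?thesis using f2(2) by simp
    qed
    ultimately show "\<exists>f\<in>Aut. edge_image f L1 = L2" by blast
  qed
qed

end

theorem theorem3p2:
  fixes V :: "'a set" and E :: "'a \<Rightarrow> 'a \<Rightarrow> bool" and L0 :: "'a set set"
  assumes "simple_graph V E"
    and "connectivity_one V E"
    and "L0 \<in> lobes V E"
  shows "lobe_transitive V E \<longleftrightarrow>
    (\<exists>\<sigma> :: 'a set set \<Rightarrow> 'a \<Rightarrow> 'a.
       (\<forall>L \<in> lobes V E. lobe_iso L0 L (\<sigma> L)) \<and>
       (\<forall>Q \<in> {orbit_of (lobe_stabilizer V E L0) w | w. w \<in> V \<and>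
                  orbit_of (lobe_stabilizer V E L0) w \<subseteq> \<Union>L0}.
          let \<tau> = (\<lambda>v. ecount {L \<in> lobes V E. v \<in> \<sigma> L ` Q});
              PQ = \<Union>{orbit_of (automorphisms V E) q | q. q \<in> Q}
          in (\<forall>P \<in> {orbit_of (automorphisms V E) u | u. u \<in> V}. \<forall>u\<in>P. \<forall>w\<in>P. \<tau> u = \<tau> w) \<and>
             (\<forall>v \<in> V. \<tau> v > 0 \<longleftrightarrow> v \<in> PQ)))"
proof -
  have cg: "cgraph V E"
    using assms(1,2) unfolding cgraph_def cgraph_axioms_def sgraph_def connectivity_one_def by blast
  interpret cgraph V E by (rule cg)
  show ?thesis
  proof
    assume "lobe_transitive V E"
    then show "\<exists>\<sigma> :: 'a set set \<Rightarrow> 'a \<Rightarrow> 'a.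
       (\<forall>L \<in> lobes V E. lobe_iso L0 L (\<sigma> L)) \<and>
       (\<forall>Q \<in> {orbit_of (lobe_stabilizer V E L0) w | w. w \<in> V \<and>
                  orbit_of (lobe_stabilizer V E L0) w \<subseteq> \<Union>L0}.
          let \<tau> = (\<lambda>v. ecount {L \<in> lobes V E. v \<in> \<sigma> L ` Q});
              PQ = \<Union>{orbit_of (automorphisms V E) q | q. q \<in> Q}
          in (\<forall>P \<in> {orbit_of (automorphisms V E) u | u. u \<in> V}. \<forall>u\<in>P. \<forall>w\<in>P. \<tau> u = \<tau> w) \<and>
             (\<forall>v \<in> V. \<tau> v > 0 \<longleftrightarrow> v \<in> PQ))" by (rule fwd[OF assms(3)])
  next
    assume "\<exists>\<sigma> :: 'a set set \<Rightarrow> 'a \<Rightarrow> 'a.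
       (\<forall>L \<in> lobes V E. lobe_iso L0 L (\<sigma> L)) \<and>
       (\<forall>Q \<in> {orbit_of (lobe_stabilizer V E L0) w | w. w \<in> V \<and>
                  orbit_of (lobe_stabilizer V E L0) w \<subseteq> \<Union>L0}.
          let \<tau> = (\<lambda>v. ecount {L \<in> lobes V E. v \<in> \<sigma> L ` Q});
              PQ = \<Union>{orbit_of (automorphisms V E) q | q. q \<in> Q}
          in (\<forall>P \<in> {orbit_of (automorphisms V E) u | u. u \<in> V}. \<forall>u\<in>P. \<forall>w\<in>P. \<tau> u = \<tau> w) \<and>
             (\<forall>v \<in> V. \<tau> v > 0 \<longleftrightarrow> v \<in> PQ))"
    then show "lobe_transitive V E" by (rule bwd[OF assms(3)])
  qed
qed


end
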